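(* Let $M$ be a right $R$-module and $S={\rm End}_R(M)$. (1) The following are equivalent: (i) $M$ is a strongly self-Rickart right $R$-module; (ii) $S$ is a strongly self-Rickart right $S$-module and for every $f\in S$, ${\rm Ker}(f)$ is $M$-cyclic; (iii) $S$ is a strongly self-Rickart right $S$-module and for every $f\in S$, ${\rm Ker}(f)\in {\rm Stat}({\rm Hom}_R(M,-))$; (iv) $S$ is a strongly self-Rickart right $S$-module and for every $f\in S$, the inclusion ${\rm ker}(f):{\rm Ker}(f)\to M$ is a locally split monomorphism; (v) $S$ is a strongly self-Rickart right $S$-module and $M$ is $k$-quasi-retractable. (2) The following are equivalent: (i) $M$ is a dual strongly self-Rickart right $R$-module; (ii) $S$ is a strongly self-Rickart left $S$-module and for every $f\in S$, ${\rm Coker}(f)$ is $M$-cocyclic; (iii) $S$ is a strongly self-Rickart left $S$-module and for every $f\in S$, ${\rm Coker}(f)\in {\rm Refl}({\rm Hom}_R(-,M))$; (iv) $S$ is a strongly self-Rickart left $S$-module and for every $f\in S$, the projection ${\rm coker}(f):M\to {\rm Coker}(f)$ is a locally split epimorphism; (v) $S$ is a strongly self-Rickart left $S$-module and $M$ is $c$-quasi-coretractable.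
   Context: A module $X$ is strongly self-Rickart if for every endomorphism $g$ of $X$, ${\rm Ker}(g)$ is a direct summand of $X$ which is fully invariant ($h({\rm Ker}(g))\subseteq{\rm Ker}(g)$ for all endomorphisms $h$); $X$ is dual strongly self-Rickart if for every endomorphism $g$, ${\rm Im}(g)$ is a fully invariant direct summand of $X$. A module $Y$ is $M$-cyclic if there is an epimorphism $M\to Y$; $Y$ is $M$-cocyclic if there is a monomorphism $Y\to M$. ${\rm Stat}({\rm Hom}_R(M,-))$ is the class of right $R$-modules $X$ for which the counit (evaluation) map ${\rm Hom}_R(M,X)\otimes_S M\to X$ of the adjunction $(-\otimes_S M,{\rm Hom}_R(M,-))$ is an isomorphism. ${\rm Refl}({\rm Hom}_R(-,M))$ is the class of right $R$-modules $X$ for which the natural evaluation map $X\to {\rm Hom}_S({\rm Hom}_R(X,M),M)$ is an isomorphism (for the pair of contravariant functors ${\rm Hom}_R(-,M)$ from right $R$-modules to left $S$-modules and ${\rm Hom}_S(-,M)$ back). A monomorphism $u:A\to B$ of right $R$-modules is locally split if for every $a\in A$ there is an $R$-homomorphism $h:B\to A$ with $h(u(a))=a$; an epimorphism $v:B\to C$ is locally split if for every $c\in C$ there is an $R$-homomorphism $h:C\to B$ with $v(h(c))=c$. $M$ is $k$-quasi-retractable if ${\rm Hom}_R(M,{\rm Ker}(f))\neq 0$ for every $f\in {\rm End}_R(M)$ with ${\rm Ker}(f)\neq 0$; $M$ is $c$-quasi-coretractable if ${\rm Hom}_R({\rm Coker}(f),M)\neq 0$ for every $f\in{\rm End}_R(M)$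 with ${\rm Coker}(f)\neq 0$. *)

theory Defs
  imports "HOL-Algebra.Module"
begin

text \<open>Opposite ring: a right A-module is a left module over the opposite ring.
  For a module record V, the field smult V a x is read as x.a when V is a right module.\<close>

definition opp :: "('a, 'b) ring_scheme \<Rightarrow> ('a, 'b) ring_scheme" where
  "opp A = A\<lparr>mult := (\<lambda>x y. monoid.mult A y x)\<rparr>"

text \<open>Left modules over an arbitrary (not necessarily commutative) unital ring.\<close>
definition lmod :: "('r, 'c) ring_scheme \<Rightarrow> ('r, 'm) module \<Rightarrow> bool" where
  "lmod A V \<longleftrightarrow> ring A \<and> abelian_group V \<and>
     (\<forall>a\<in>carrier A. \<forall>x\<in>carrier V. smult V a x \<in> carrier V) \<and>
     (\<forall>a\<in>carrier A. \<forall>b\<in>carrier A. \<forall>x\<in>carrier V.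
        smult V (a \<oplus>\<^bsub>A\<^esub> b) x = smult V a x \<oplus>\<^bsub>V\<^esub> smult V b x) \<and>
     (\<forall>a\<in>carrier A. \<forall>x\<in>carrier V. \<forall>y\<in>carrier V.
        smult V a (x \<oplus>\<^bsub>V\<^esub> y) = smult V a x \<oplus>\<^bsub>V\<^esub> smult V a y) \<and>
     (\<forall>a\<in>carrier A. \<forall>b\<in>carrier A. \<forall>x\<in>carrier V.
        smult V (a \<otimes>\<^bsub>A\<^esub> b) x = smult V a (smult V b x)) \<and>
     (\<forall>x\<in>carrier V. smult V \<one>\<^bsub>A\<^esub> x = x)"

definition rmod :: "('r, 'c) ring_scheme \<Rightarrow> ('r, 'm) module \<Rightarrow> bool" where
  "rmod A V \<longleftrightarrow> lmod (opp A) V"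

definition mhom :: "('r, 'c) ring_scheme \<Rightarrow> ('r, 'm) module \<Rightarrow> ('r, 'n) module \<Rightarrow> ('m \<Rightarrow> 'n) set" where
  "mhom A V W = {f. f \<in> carrier V \<rightarrow>\<^sub>E carrier W \<and>
     (\<forall>x\<in>carrier V. \<forall>y\<in>carrier V. f (x \<oplus>\<^bsub>V\<^esub> y) = f x \<oplus>\<^bsub>W\<^esub> f y) \<and>
     (\<forall>a\<in>carrier A. \<forall>x\<in>carrier V. f (smult V a x) = smult W a (f x))}"

definition mker :: "('r, 'm) module \<Rightarrow> ('r, 'n) module \<Rightarrow> ('m \<Rightarrow> 'n) \<Rightarrow> 'm set" where
  "mker V W f = {x \<in> carrier V. f x = \<zero>\<^bsub>W\<^esub>}"

definition submod :: "('r, 'm) module \<Rightarrow> 'm set \<Rightarrow> ('r, 'm) module" where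
  "submod V N = V\<lparr>carrier := N\<rparr>"

definition is_submod :: "('r, 'c) ring_scheme \<Rightarrow> ('r, 'm) module \<Rightarrow> 'm set \<Rightarrow> bool" where
  "is_submod A V N \<longleftrightarrow> N \<subseteq> carrier V \<and> \<zero>\<^bsub>V\<^esub> \<in> N \<and>
     (\<forall>x\<in>N. \<forall>y\<in>N. x \<oplus>\<^bsub>V\<^esub> y \<in> N) \<and> (\<forall>x\<in>N. \<ominus>\<^bsub>V\<^esub> x \<in> N) \<and>
     (\<forall>a\<in>carrier A. \<forall>x\<in>N. smult V a x \<in> N)"

definition dsummand :: "('r, 'c) ring_scheme \<Rightarrow> ('r, 'm) module \<Rightarrow> 'm set \<Rightarrow> bool" where
  "dsummand A V N \<longleftrightarrow> is_submod A V N \<and>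
     (\<exists>L. is_submod A V L \<and> N \<inter> L = {\<zero>\<^bsub>V\<^esub>} \<and>
          (\<forall>x\<in>carrier V. \<exists>n\<in>N. \<exists>l\<in>L. x = n \<oplus>\<^bsub>V\<^esub> l))"

definition fully_invariant :: "('r, 'c) ring_scheme \<Rightarrow> ('r, 'm) module \<Rightarrow> 'm set \<Rightarrow> bool" where
  "fully_invariant A V N \<longleftrightarrow> (\<forall>h\<in>mhom A V V. h ` N \<subseteq> N)"

text \<open>Strongly self-Rickart / dual strongly self-Rickart, for left A-modules
  (for right modules, use A := opp A).\<close>
definition strongly_self_rickart :: "('r, 'c) ring_scheme \<Rightarrow> ('r, 'm) module \<Rightarrow> bool" where
  "strongly_self_rickart A V \<longleftrightarrow>
     (\<forall>g\<in>mhom A V V. dsummand A V (mker V V g) \<and> fully_invariant A V (mker V V g))"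

definition dual_strongly_self_rickart :: "('r, 'c) ring_scheme \<Rightarrow> ('r, 'm) module \<Rightarrow> bool" where
  "dual_strongly_self_rickart A V \<longleftrightarrow>
     (\<forall>g\<in>mhom A V V. dsummand A V (g ` carrier V) \<and> fully_invariant A V (g ` carrier V))"

definition End_ring :: "('r, 'c) ring_scheme \<Rightarrow> ('r, 'm) module \<Rightarrow> ('m \<Rightarrow> 'm) ring" where
  "End_ring A V = \<lparr>carrier = mhom A V V,
     mult = (\<lambda>f g. \<lambda>x\<in>carrier V. f (g x)),
     one = (\<lambda>x\<in>carrier V. x),
     zero = (\<lambda>x\<in>carrier V. \<zero>\<^bsub>V\<^esub>),
     add = (\<lambda>f g. \<lambda>x\<in>carrier V. f x \<oplus>\<^bsub>V\<^esub> g x)\<rparr>"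

definition ring_lmod :: "('a, 'b) ring_scheme \<Rightarrow> ('a, 'a) module" where
  "ring_lmod A = \<lparr>carrier = carrier A, mult = monoid.mult A, one = one A, zero = zero A,
     add = add A, smult = monoid.mult A\<rparr>"

definition ring_rmod :: "('a, 'b) ring_scheme \<Rightarrow> ('a, 'a) module" where
  "ring_rmod A = \<lparr>carrier = carrier A, mult = monoid.mult A, one = one A, zero = zero A,
     add = add A, smult = (\<lambda>s x. monoid.mult A x s)\<rparr>"

definition End_lmod :: "('r, 'm) module \<Rightarrow> ('m \<Rightarrow> 'm, 'm) module" where
  "End_lmod V = \<lparr>carrier = carrier V, mult = monoid.mult V, one = one V, zero = zero V,
     add = add V, smult = (\<lambda>s m. s m)\<rparr>"

definition mcoset :: "('r, 'm) module \<Rightarrow> 'm set \<Rightarrow> 'm \<Rightarrow> 'm set" where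
  "mcoset V N a = (\<lambda>n. a \<oplus>\<^bsub>V\<^esub> n) ` N"

definition quot_mod :: "('r, 'm) module \<Rightarrow> 'm set \<Rightarrow> ('r, 'm set) module" where
  "quot_mod V N = \<lparr>carrier = mcoset V N ` carrier V,
     mult = undefined, one = undefined,
     zero = N,
     add = (\<lambda>A B. \<Union>a\<in>A. \<Union>b\<in>B. mcoset V N (a \<oplus>\<^bsub>V\<^esub> b)),
     smult = (\<lambda>r A. \<Union>a\<in>A. mcoset V N (smult V r a))\<rparr>"

definition quot_proj :: "('r, 'm) module \<Rightarrow> 'm set \<Rightarrow> 'm \<Rightarrow> 'm set" where
  "quot_proj V N = (\<lambda>a\<in>carrier V. mcoset V N a)"

definition Coker :: "('r, 'm) module \<Rightarrow> ('m \<Rightarrow> 'm) \<Rightarrow> ('r, 'm set) module" where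
  "Coker V f = quot_mod V (f ` carrier V)"

definition coker :: "('r, 'm) module \<Rightarrow> ('m \<Rightarrow> 'm) \<Rightarrow> 'm \<Rightarrow> 'm set" where
  "coker V f = quot_proj V (f ` carrier V)"

text \<open>Free abelian group on a set P: finitely supported integer-valued functions on P.\<close>
definition free_on :: "'p set \<Rightarrow> ('p \<Rightarrow> int) set" where
  "free_on P = {c. finite {p. c p \<noteq> 0} \<and> {p. c p \<noteq> 0} \<subseteq> P}"

definition delta :: "'p \<Rightarrow> 'p \<Rightarrow> int" where
  "delta p = (\<lambda>q. if q = p then 1 else 0)"

inductive_set zspan :: "('p \<Rightarrow> int) set \<Rightarrow> ('p \<Rightarrow> int) set" for G where
  zspan_zero: "(\<lambda>_. 0) \<in> zspan G"
| zspan_gen: "g \<in> G \<Longrightarrow> g \<in> zspan G"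
| zspan_diff: "a \<in> zspan G \<Longrightarrow> b \<in> zspan G \<Longrightarrow> a - b \<in> zspan G"

text \<open>Defining relations of Hom_R(M,V) (x)_S M, S = End_R(M), where Hom_R(M,V) is a
  right S-module via (g.s)(y) = g(s y) and M is a left S-module via s.m = s m.\<close>
definition tens_rel :: "('r, 'c) ring_scheme \<Rightarrow> ('r, 'm) module \<Rightarrow> ('r, 'x) module
    \<Rightarrow> (('m \<Rightarrow> 'x) \<times> 'm \<Rightarrow> int) set" where
  "tens_rel R M V =
     {delta (\<lambda>y\<in>carrier M. g y \<oplus>\<^bsub>V\<^esub> g' y, m) - delta (g, m) - delta (g', m) | g g' m.
        g \<in> mhom (opp R) M V \<and> g' \<in> mhom (opp R) M V \<and> m \<in> carrier M}
   \<union> {delta (g, m \<oplus>\<^bsub>M\<^esub> m') - delta (g, m) - delta (g, m') | g m m'.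
        g \<in> mhom (opp R) M V \<and> m \<in> carrier M \<and> m' \<in> carrier M}
   \<union> {delta (\<lambda>y\<in>carrier M. g (s y), m) - delta (g, s m) | g s m.
        g \<in> mhom (opp R) M V \<and> s \<in> carrier (End_ring (opp R) M) \<and> m \<in> carrier M}"

text \<open>The counit g (x) m |-> g(m), on formal sums.\<close>
definition tens_eval :: "('r, 'x) module \<Rightarrow> (('m \<Rightarrow> 'x) \<times> 'm \<Rightarrow> int) \<Rightarrow> 'x" where
  "tens_eval V c = finsum V (\<lambda>p. [c p] \<cdot>\<^bsub>V\<^esub> (fst p (snd p))) {p. c p \<noteq> 0}"

text \<open>V in Stat(Hom_R(M,-)): the counit Hom_R(M,V) (x)_S M -> V, i.e. the map induced by
  tens_eval on the quotient free/relations, is bijective (it is automatically R-linear).\<close>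
definition in_Stat :: "('r, 'c) ring_scheme \<Rightarrow> ('r, 'm) module \<Rightarrow> ('r, 'x) module \<Rightarrow> bool" where
  "in_Stat R M V \<longleftrightarrow>
     tens_eval V ` free_on (mhom (opp R) M V \<times> carrier M) = carrier V \<and>
     {c \<in> free_on (mhom (opp R) M V \<times> carrier M). tens_eval V c = \<zero>\<^bsub>V\<^esub>}
       = zspan (tens_rel R M V)"

definition homXM_lmod :: "('r, 'c) ring_scheme \<Rightarrow> ('r, 'm) module \<Rightarrow> ('r, 'x) module
    \<Rightarrow> ('m \<Rightarrow> 'm, 'x \<Rightarrow> 'm) module" where
  "homXM_lmod R M V = \<lparr>carrier = mhom (opp R) V M, mult = undefined, one = undefined,
     zero = (\<lambda>x\<in>carrier V. \<zero>\<^bsub>M\<^esub>),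
     add = (\<lambda>\<phi> \<psi>. \<lambda>x\<in>carrier V. \<phi> x \<oplus>\<^bsub>M\<^esub> \<psi> x),
     smult = (\<lambda>s \<phi>. \<lambda>x\<in>carrier V. s (\<phi> x))\<rparr>"

definition in_Refl :: "('r, 'c) ring_scheme \<Rightarrow> ('r, 'm) module \<Rightarrow> ('r, 'x) module \<Rightarrow> bool" where
  "in_Refl R M V \<longleftrightarrow>
     bij_betw (\<lambda>x\<in>carrier V. (\<lambda>\<phi>\<in>mhom (opp R) V M. \<phi> x)) (carrier V)
       (mhom (End_ring (opp R) M) (homXM_lmod R M V) (End_lmod M))"

definition M_cyclic :: "('r, 'c) ring_scheme \<Rightarrow> ('r, 'm) module \<Rightarrow> ('r, 'x) module \<Rightarrow> bool" where
  "M_cyclic R M W \<longleftrightarrow> (\<exists>h\<in>mhom (opp R) M W. h ` carrier M = carrier W)"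

definition M_cocyclic :: "('r, 'c) ring_scheme \<Rightarrow> ('r, 'm) module \<Rightarrow> ('r, 'x) module \<Rightarrow> bool" where
  "M_cocyclic R M W \<longleftrightarrow> (\<exists>h\<in>mhom (opp R) W M. inj_on h (carrier W))"

definition incl_locally_split :: "('r, 'c) ring_scheme \<Rightarrow> ('r, 'm) module \<Rightarrow> 'm set \<Rightarrow> bool" where
  "incl_locally_split R M K \<longleftrightarrow> (\<forall>a\<in>K. \<exists>h\<in>mhom (opp R) M (submod M K). h a = a)"

definition epi_locally_split :: "('r, 'c) ring_scheme \<Rightarrow> ('r, 'm) module \<Rightarrow> ('r, 'x) module
    \<Rightarrow> ('m \<Rightarrow> 'x) \<Rightarrow> bool" where
  "epi_locally_split R B C v \<longleftrightarrow> (\<forall>c\<in>carrier C. \<exists>h\<in>mhom (opp R) C B. v (h c) = c)"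

definition k_quasi_retractable :: "('r, 'c) ring_scheme \<Rightarrow> ('r, 'm) module \<Rightarrow> bool" where
  "k_quasi_retractable R M \<longleftrightarrow>
     (\<forall>f\<in>carrier (End_ring (opp R) M). mker M M f \<noteq> {\<zero>\<^bsub>M\<^esub>} \<longrightarrow>
        (\<exists>h\<in>mhom (opp R) M (submod M (mker M M f)). \<exists>x\<in>carrier M. h x \<noteq> \<zero>\<^bsub>M\<^esub>))"

definition c_quasi_coretractable :: "('r, 'c) ring_scheme \<Rightarrow> ('r, 'm) module \<Rightarrow> bool" where
  "c_quasi_coretractable R M \<longleftrightarrow>
     (\<forall>f\<in>carrier (End_ring (opp R) M). carrier (Coker M f) \<noteq> {\<zero>\<^bsub>Coker M f\<^esub>} \<longrightarrow>
        (\<exists>h\<in>mhom (opp R) (Coker M f) M. \<exists>c\<in>carrier (Coker M f). h c \<noteq> \<zero>\<^bsub>M\<^esub>))"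

end

theory Submission
  imports Defs "HOL-Library.Function_Algebras"
begin

context abelian_group
begin

lemma ag_eq_minus: "x \<in> carrier G \<Longrightarrow> y \<in> carrier G \<Longrightarrow> x \<ominus> y = \<zero> \<longleftrightarrow> x = y"
  by (metis a_minus_def add.inv_closed add.inv_equality minus_minus r_neg)

lemma ag_minus_add: "x \<in> carrier G \<Longrightarrow> y \<in> carrier G \<Longrightarrow> (x \<ominus> y) \<oplus> y = x"
  by (metis a_assoc a_minus_def add.inv_closed l_neg r_zero)

lemma ag_add_minus: "x \<in> carrier G \<Longrightarrow> y \<in> carrier G \<Longrightarrow> (x \<oplus> y) \<ominus> y = x"
  by (metis a_assoc a_minus_def add.inv_closed r_neg r_zero)

lemma ag_add_minus2: "x \<in> carrier G \<Longrightarrow> y \<in> carrier G \<Longrightarrow> (x \<oplus> y) \<ominus> x = y"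
  by (metis a_comm ag_add_minus)

lemma ag_minus_self: "x \<in> carrier G \<Longrightarrow> x \<ominus> x = \<zero>"
  by (simp add: a_minus_def r_neg)

lemma ag_minus_zero: "x \<in> carrier G \<Longrightarrow> x \<ominus> \<zero> = x"
  by (simp add: a_minus_def)

lemma ag_zero_minus: "x \<in> carrier G \<Longrightarrow> \<zero> \<ominus> x = \<ominus> x"
  by (simp add: a_minus_def)

lemma ag_idem_zero: "x \<in> carrier G \<Longrightarrow> x \<oplus> x = x \<Longrightarrow> x = \<zero>"
  by (metis ag_add_minus ag_minus_self)

lemma ag_minus_minus: "x \<in> carrier G \<Longrightarrow> y \<in> carrier G \<Longrightarrow> z \<in> carrier G \<Longrightarrow>
   (x \<oplus> y) \<ominus> (z \<oplus> y) = x \<ominus> z"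
  by (smt (verit, ccfv_threshold) a_assoc a_comm a_minus_def add.inv_closed add.m_closed
      minus_add r_neg r_zero)

lemma ag_add_minus_distrib: "x \<in> carrier G \<Longrightarrow> y \<in> carrier G \<Longrightarrow> u \<in> carrier G \<Longrightarrow> v \<in> carrier G \<Longrightarrow>
   (x \<oplus> y) \<ominus> (u \<oplus> v) = (x \<ominus> u) \<oplus> (y \<ominus> v)"
  by (smt (verit, ccfv_threshold) a_assoc a_comm a_minus_def add.inv_closed add.m_closed
      minus_add)

lemma ag_minus_distrib: "x \<in> carrier G \<Longrightarrow> y \<in> carrier G \<Longrightarrow> \<ominus> (x \<ominus> y) = y \<ominus> x"
  by (metis a_comm a_minus_def add.inv_closed minus_add minus_minus)

end

locale lm = fixes A :: "('r, 'c) ring_scheme" and V :: "('r, 'm) module" (structure)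
  assumes lm: "lmod A V"
begin

sublocale abelian_group V using lm by (simp add: lmod_def)

lemma smult_closed[simp,intro]: "a \<in> carrier A \<Longrightarrow> x \<in> carrier V \<Longrightarrow> smult V a x \<in> carrier V"
  using lm by (simp add: lmod_def)

lemma smult_add: "a \<in> carrier A \<Longrightarrow> x \<in> carrier V \<Longrightarrow> y \<in> carrier V \<Longrightarrow>
   smult V a (x \<oplus> y) = smult V a x \<oplus> smult V a y"
  using lm by (simp add: lmod_def)

lemma smult_zero[simp]: "a \<in> carrier A \<Longrightarrow> smult V a \<zero> = \<zero>"
  by (metis ag_idem_zero l_zero smult_add smult_closed zero_closed)

lemma smult_neg: "a \<in> carrier A \<Longrightarrow> x \<in> carrier V \<Longrightarrow> smult V a (\<ominus> x) = \<ominus> smult V a x"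
  by (metis add.inv_closed add.inv_equality l_neg smult_add smult_closed smult_zero)

lemma smult_minus: "a \<in> carrier A \<Longrightarrow> x \<in> carrier V \<Longrightarrow> y \<in> carrier V \<Longrightarrow>
   smult V a (x \<ominus> y) = smult V a x \<ominus> smult V a y"
  by (simp add: a_minus_def smult_add smult_neg)

end

lemma mhomD:
  assumes "f \<in> mhom A V W"
  shows "x \<in> carrier V \<Longrightarrow> f x \<in> carrier W"
    and "x \<notin> carrier V \<Longrightarrow> f x = undefined"
    and "x \<in> carrier V \<Longrightarrow> y \<in> carrier V \<Longrightarrow> f (x \<oplus>\<^bsub>V\<^esub> y) = f x \<oplus>\<^bsub>W\<^esub> f y"
    and "a \<in> carrier A \<Longrightarrow> x \<in> carrier V \<Longrightarrow> f (smult V a x) = smult W a (f x)"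
  using assms by (auto simp: mhom_def PiE_def extensional_def)

lemma mhomI:
  assumes "\<And>x. x \<in> carrier V \<Longrightarrow> f x \<in> carrier W"
    and "\<And>x. x \<notin> carrier V \<Longrightarrow> f x = undefined"
    and "\<And>x y. x \<in> carrier V \<Longrightarrow> y \<in> carrier V \<Longrightarrow> f (x \<oplus>\<^bsub>V\<^esub> y) = f x \<oplus>\<^bsub>W\<^esub> f y"
    and "\<And>a x. a \<in> carrier A \<Longrightarrow> x \<in> carrier V \<Longrightarrow> f (smult V a x) = smult W a (f x)"
  shows "f \<in> mhom A V W"
  using assms by (auto simp: mhom_def PiE_def extensional_def)

lemma mhom_zero:
  assumes "f \<in> mhom A V W" "abelian_group V" "abelian_group W"
  shows "f \<zero>\<^bsub>V\<^esub> = \<zero>\<^bsub>W\<^esub>"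
proof -
  interpret V: abelian_group V by fact
  interpret W: abelian_group W by fact
  have "f \<zero>\<^bsub>V\<^esub> = f \<zero>\<^bsub>V\<^esub> \<oplus>\<^bsub>W\<^esub> f \<zero>\<^bsub>V\<^esub>"
    using mhomD(3)[OF assms(1), of "\<zero>\<^bsub>V\<^esub>" "\<zero>\<^bsub>V\<^esub>"] by simp
  then show ?thesis
    by (metis W.ag_idem_zero V.zero_closed assms(1) mhomD(1))
qed

lemma mhom_neg:
  assumes "f \<in> mhom A V W" "abelian_group V" "abelian_group W" "x \<in> carrier V"
  shows "f (\<ominus>\<^bsub>V\<^esub> x) = \<ominus>\<^bsub>W\<^esub> f x"
proof -
  interpret V: abelian_group V by fact
  interpret W: abelian_group W by fact
  have "f (\<ominus>\<^bsub>V\<^esub> x) \<oplus>\<^bsub>W\<^esub> f x = \<zero>\<^bsub>W\<^esub>"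
    using mhomD(3)[OF assms(1), of "\<ominus>\<^bsub>V\<^esub> x" x] mhom_zero[OF assms(1-3)] assms(4)
    by (simp add: V.l_neg)
  then show ?thesis
    using W.add.inv_equality assms(1) assms(4) mhomD(1) by fastforce
qed

lemma mhom_minus:
  assumes "f \<in> mhom A V W" "abelian_group V" "abelian_group W" "x \<in> carrier V" "y \<in> carrier V"
  shows "f (x \<ominus>\<^bsub>V\<^esub> y) = f x \<ominus>\<^bsub>W\<^esub> f y"
  using assms mhom_neg[OF assms(1-3)] mhomD(3)[OF assms(1)]
  by (simp add: a_minus_def abelian_group.a_inv_closed)


lemma opp_carrier[simp]: "carrier (opp A) = carrier A"
  by (simp add: opp_def)
lemma opp_add[simp]: "add (opp A) = add A" by (simp add: opp_def)
lemma opp_zero[simp]: "zero (opp A) = zero A" by (simp add: opp_def)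
lemma opp_one[simp]: "one (opp A) = one A" by (simp add: opp_def)
lemma opp_mult[simp]: "mult (opp A) x y = mult A y x" by (simp add: opp_def)

lemma End_carrier[simp]: "carrier (End_ring A V) = mhom A V V"
  by (simp add: End_ring_def)

lemma End_ring_simps:
  "carrier (End_ring A V) = mhom A V V"
  "mult (End_ring A V) = (\<lambda>f g. \<lambda>x\<in>carrier V. f (g x))"
  "one (End_ring A V) = (\<lambda>x\<in>carrier V. x)"
  "zero (End_ring A V) = (\<lambda>x\<in>carrier V. \<zero>\<^bsub>V\<^esub>)"
  "add (End_ring A V) = (\<lambda>f g. \<lambda>x\<in>carrier V. f x \<oplus>\<^bsub>V\<^esub> g x)"
  by (simp_all add: End_ring_def)

lemma ring_rmod_simps[simp]:
  "carrier (ring_rmod S) = carrier S" "add (ring_rmod S) = add S" "zero (ring_rmod S) = zero S"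
  "smult (ring_rmod S) = (\<lambda>s x. mult S x s)"
  by (simp_all add: ring_rmod_def)

lemma ring_lmod_simps[simp]:
  "carrier (ring_lmod S) = carrier S" "add (ring_lmod S) = add S" "zero (ring_lmod S) = zero S"
  "smult (ring_lmod S) = mult S"
  by (simp_all add: ring_lmod_def)

lemma submod_simps[simp]:
  "carrier (submod V N) = N" "add (submod V N) = add V" "zero (submod V N) = zero V"
  "smult (submod V N) = smult V"
  by (simp_all add: submod_def)

context lm
begin

lemma hom_ext: "f \<in> mhom A V V \<Longrightarrow> g \<in> mhom A V V \<Longrightarrow> (\<And>x. x \<in> carrier V \<Longrightarrow> f x = g x) \<Longrightarrow> f = g"
  by (rule ext) (metis mhomD(2))

lemma restrict_eq_iff: "((\<lambda>x\<in>carrier V. F x) = (\<lambda>x\<in>carrier V. G x)) \<longleftrightarrow> (\<forall>x\<in>carrier V. F x = G x)"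
  by (auto simp: fun_eq_iff restrict_def split: if_splits)

lemma hom_comp[intro]: "f \<in> mhom A V V \<Longrightarrow> g \<in> mhom A V V \<Longrightarrow> (\<lambda>x\<in>carrier V. f (g x)) \<in> mhom A V V"
  by (rule mhomI) (simp_all add: mhomD(1,3,4))

lemma hom_id[intro]: "(\<lambda>x\<in>carrier V. x) \<in> mhom A V V"
  by (rule mhomI) auto

lemma hom_zerof[intro]: "(\<lambda>x\<in>carrier V. \<zero>) \<in> mhom A V V"
  by (rule mhomI) auto

lemma hom_add[intro]: "f \<in> mhom A V V \<Longrightarrow> g \<in> mhom A V V \<Longrightarrow> (\<lambda>x\<in>carrier V. f x \<oplus> g x) \<in> mhom A V V"
  by (rule mhomI) (simp_all add: mhomD(1,3,4) smult_add a_ac)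

lemma hom_neg[intro]: "f \<in> mhom A V V \<Longrightarrow> (\<lambda>x\<in>carrier V. \<ominus> f x) \<in> mhom A V V"
  by (rule mhomI) (simp_all add: mhomD(1,3,4) smult_neg minus_add a_comm)

lemma hom_minusf[intro]: "f \<in> mhom A V V \<Longrightarrow> g \<in> mhom A V V \<Longrightarrow> (\<lambda>x\<in>carrier V. f x \<ominus> g x) \<in> mhom A V V"
  by (rule mhomI) (simp_all add: mhomD(1,3,4) smult_minus ag_add_minus_distrib)

lemma hZ: "f \<in> mhom A V V \<Longrightarrow> f \<zero> = \<zero>"
  using mhom_zero[of f A V V] abelian_group_axioms by blast

lemma hN: "f \<in> mhom A V V \<Longrightarrow> x \<in> carrier V \<Longrightarrow> f (\<ominus> x) = \<ominus> f x"
  using mhom_neg[of f A V V] abelian_group_axioms by blast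

lemma hM: "f \<in> mhom A V V \<Longrightarrow> x \<in> carrier V \<Longrightarrow> y \<in> carrier V \<Longrightarrow> f (x \<ominus> y) = f x \<ominus> f y"
  using mhom_minus[of f A V V] abelian_group_axioms by blast

lemma End_ag:
  fixes H :: "('m \<Rightarrow> 'm, 'z) ring_scheme"
  assumes cH: "carrier H = mhom A V V" and aH: "add H = (\<lambda>f g. \<lambda>x\<in>carrier V. f x \<oplus> g x)"
    and zH: "zero H = (\<lambda>x\<in>carrier V. \<zero>)"
  shows "abelian_group H"
proof (rule abelian_groupI)
  fix x y z assume xyz: "x \<in> carrier H" "y \<in> carrier H" "z \<in> carrier H"
  have xc[simp]: "\<And>v. v \<in> carrier V \<Longrightarrow> x v \<in> carrier V" using mhomD(1)[of x A V V] xyz cH by simp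
  have yc[simp]: "\<And>v. v \<in> carrier V \<Longrightarrow> y v \<in> carrier V" using mhomD(1)[of y A V V] xyz cH by simp
  have zc[simp]: "\<And>v. v \<in> carrier V \<Longrightarrow> z v \<in> carrier V" using mhomD(1)[of z A V V] xyz cH by simp
  show "x \<oplus>\<^bsub>H\<^esub> y \<in> carrier H" unfolding aH using xyz unfolding cH by (intro hom_add)
  show "x \<oplus>\<^bsub>H\<^esub> y \<oplus>\<^bsub>H\<^esub> z = x \<oplus>\<^bsub>H\<^esub> (y \<oplus>\<^bsub>H\<^esub> z)"
    unfolding aH restrict_eq_iff by (simp add: a_assoc)
  show "x \<oplus>\<^bsub>H\<^esub> y = y \<oplus>\<^bsub>H\<^esub> x"
    unfolding aH restrict_eq_iff by (simp add: a_comm)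
next
  show "\<zero>\<^bsub>H\<^esub> \<in> carrier H" unfolding cH zH by (rule hom_zerof)
next
  fix x assume x: "x \<in> carrier H"
  have xc[simp]: "\<And>v. v \<in> carrier V \<Longrightarrow> x v \<in> carrier V" using mhomD(1)[of x A V V] x cH by simp
  have xm: "x \<in> mhom A V V" using x cH by simp
  show "\<zero>\<^bsub>H\<^esub> \<oplus>\<^bsub>H\<^esub> x = x"
    unfolding aH zH by (rule hom_ext[OF hom_add[OF hom_zerof xm] xm]) simp
  show "\<exists>y\<in>carrier H. y \<oplus>\<^bsub>H\<^esub> x = \<zero>\<^bsub>H\<^esub>"
    by (rule bexI[of _ "\<lambda>v\<in>carrier V. \<ominus> x v"]) (use xm in \<open>auto simp: cH aH zH restrict_eq_iff l_neg\<close>)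
qed

lemma End_ainv:
  fixes H :: "('m \<Rightarrow> 'm, 'z) ring_scheme"
  assumes cH: "carrier H = mhom A V V" and aH: "add H = (\<lambda>f g. \<lambda>x\<in>carrier V. f x \<oplus> g x)"
    and zH: "zero H = (\<lambda>x\<in>carrier V. \<zero>)" and f: "f \<in> mhom A V V"
  shows "\<ominus>\<^bsub>H\<^esub> f = (\<lambda>x\<in>carrier V. \<ominus> f x)"
proof -
  interpret H: abelian_group H using End_ag cH aH zH by blast
  have fc[simp]: "\<And>v. v \<in> carrier V \<Longrightarrow> f v \<in> carrier V" using mhomD(1)[of f A V V] f by simp
  show ?thesis
    by (rule H.minus_equality) (use f in \<open>auto simp: cH aH zH restrict_eq_iff l_neg\<close>)
qed

end

section \<open>Idempotent endomorphisms give direct summands\<close>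

lemma idem_summand:
  fixes W :: "('r, 'm) module" and B :: "('r, 'c) ring_scheme"
  assumes ag: "abelian_group W"
    and sm: "\<And>b x. b \<in> carrier B \<Longrightarrow> x \<in> carrier W \<Longrightarrow> smult W b x \<in> carrier W"
    and sm0: "\<And>b. b \<in> carrier B \<Longrightarrow> smult W b \<zero>\<^bsub>W\<^esub> = \<zero>\<^bsub>W\<^esub>"
    and e: "e \<in> mhom B W W" and idem: "\<And>x. x \<in> carrier W \<Longrightarrow> e (e x) = e x"
  shows "dsummand B W (e ` carrier W)" "dsummand B W {x \<in> carrier W. e x = \<zero>\<^bsub>W\<^esub>}"
proof -
  interpret abelian_group W by fact
  have h: "\<And>x. x \<in> carrier W \<Longrightarrow> e x \<in> carrier W" using mhomD(1)[OF e] .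
  have z: "e \<zero>\<^bsub>W\<^esub> = \<zero>\<^bsub>W\<^esub>" using mhom_zero[OF e ag ag] .
  have n: "\<And>x. x \<in> carrier W \<Longrightarrow> e (\<ominus>\<^bsub>W\<^esub> x) = \<ominus>\<^bsub>W\<^esub> e x" using mhom_neg[OF e ag ag] .
  have mi: "\<And>x y. x \<in> carrier W \<Longrightarrow> y \<in> carrier W \<Longrightarrow> e (x \<ominus>\<^bsub>W\<^esub> y) = e x \<ominus>\<^bsub>W\<^esub> e y"
    using mhom_minus[OF e ag ag] .
  have ad: "\<And>x y. x \<in> carrier W \<Longrightarrow> y \<in> carrier W \<Longrightarrow> e (x \<oplus>\<^bsub>W\<^esub> y) = e x \<oplus>\<^bsub>W\<^esub> e y"
    using mhomD(3)[OF e] .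
  have sme: "\<And>b x. b \<in> carrier B \<Longrightarrow> x \<in> carrier W \<Longrightarrow> e (smult W b x) = smult W b (e x)"
    using mhomD(4)[OF e] .
  have I: "is_submod B W (e ` carrier W)"
    unfolding is_submod_def
  proof (intro conjI ballI)
    show "e ` carrier W \<subseteq> carrier W" using h by auto
    show "\<zero>\<^bsub>W\<^esub> \<in> e ` carrier W" using z by (metis image_eqI zero_closed)
  next
    fix x y assume "x \<in> e ` carrier W" "y \<in> e ` carrier W"
    then obtain u v where "u \<in> carrier W" "v \<in> carrier W" "x = e u" "y = e v" by auto
    then show "x \<oplus>\<^bsub>W\<^esub> y \<in> e ` carrier W" using ad by (metis a_closed image_eqI)
  next
    fix x assume "x \<in> e ` carrier W"
    then obtain u where "u \<in> carrier W" "x = e u" by auto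
    then show "\<ominus>\<^bsub>W\<^esub> x \<in> e ` carrier W" using n by (metis a_inv_closed image_eqI)
  next
    fix b x assume "b \<in> carrier B" "x \<in> e ` carrier W"
    then obtain u where "u \<in> carrier W" "x = e u" by auto
    then show "smult W b x \<in> e ` carrier W" using sme sm \<open>b \<in> carrier B\<close> by (metis image_eqI)
  qed
  have K: "is_submod B W {x \<in> carrier W. e x = \<zero>\<^bsub>W\<^esub>}"
    unfolding is_submod_def
    by (auto simp: z n ad sme sm sm0 add.inv_one)
  have split1: "\<And>x. x \<in> carrier W \<Longrightarrow> x = e x \<oplus>\<^bsub>W\<^esub> (x \<ominus>\<^bsub>W\<^esub> e x)"
    by (metis a_comm ag_minus_add h minus_closed)
  have kk: "\<And>x. x \<in> carrier W \<Longrightarrow> e (x \<ominus>\<^bsub>W\<^esub> e x) = \<zero>\<^bsub>W\<^esub>"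
    using mi idem h ag_minus_self by simp
  have int: "e ` carrier W \<inter> {x \<in> carrier W. e x = \<zero>\<^bsub>W\<^esub>} = {\<zero>\<^bsub>W\<^esub>}"
  proof
    show "e ` carrier W \<inter> {x \<in> carrier W. e x = \<zero>\<^bsub>W\<^esub>} \<subseteq> {\<zero>\<^bsub>W\<^esub>}"
      using idem by auto
    show "{\<zero>\<^bsub>W\<^esub>} \<subseteq> e ` carrier W \<inter> {x \<in> carrier W. e x = \<zero>\<^bsub>W\<^esub>}"
      using z by (auto intro: image_eqI[of _ _ "\<zero>\<^bsub>W\<^esub>"])
  qed
  show "dsummand B W (e ` carrier W)"
    unfolding dsummand_def
    using I K int split1 kk by (intro conjI exI[of _ "{x \<in> carrier W. e x = \<zero>\<^bsub>W\<^esub>}"]) (auto, metis image_eqI minus_closed h)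
  show "dsummand B W {x \<in> carrier W. e x = \<zero>\<^bsub>W\<^esub>}"
    unfolding dsummand_def
  proof (intro conjI exI[of _ "e ` carrier W"] ballI)
    fix x assume x: "x \<in> carrier W"
    show "\<exists>n\<in>{x \<in> carrier W. e x = \<zero>\<^bsub>W\<^esub>}. \<exists>l\<in>e ` carrier W. x = n \<oplus>\<^bsub>W\<^esub> l"
      using x kk h split1 by (intro bexI[of _ "x \<ominus>\<^bsub>W\<^esub> e x"] bexI[of _ "e x"]) (auto simp: a_comm)
  qed (use K I int in auto)
qed


context lm
begin

lemma hc: "f \<in> mhom A V V \<Longrightarrow> x \<in> carrier V \<Longrightarrow> f x \<in> carrier V"
  by (rule mhomD(1))

lemma hcb: "f \<in> mhom A V V \<Longrightarrow> \<forall>x\<in>carrier V. f x \<in> carrier V"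
  using mhomD(1) by fast

lemma summand_proj:
  assumes "dsummand A V N"
  shows "\<exists>e\<in>mhom A V V. (\<forall>x\<in>carrier V. e x \<in> N) \<and> (\<forall>x\<in>N. e x = x)"
proof -
  obtain L where N: "is_submod A V N" and L: "is_submod A V L" and NL: "N \<inter> L = {\<zero>}"
    and dec: "\<And>x. x \<in> carrier V \<Longrightarrow> \<exists>n\<in>N. \<exists>l\<in>L. x = n \<oplus> l"
    using assms unfolding dsummand_def by blast
  have NV: "N \<subseteq> carrier V" and LV: "L \<subseteq> carrier V" using N L by (auto simp: is_submod_def)
  have Nm: "\<And>x y. x \<in> N \<Longrightarrow> y \<in> N \<Longrightarrow> x \<ominus> y \<in> N"
    using N unfolding is_submod_def a_minus_def by blast
  have Lm: "\<And>x y. x \<in> L \<Longrightarrow> y \<in> L \<Longrightarrow> x \<ominus> y \<in> L"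
    using L unfolding is_submod_def a_minus_def by blast
  have uniq: "n = n'" if "n \<in> N" "n' \<in> N" "l \<in> L" "l' \<in> L" "n \<oplus> l = n' \<oplus> l'" for n n' l l'
  proof -
    have c: "n \<in> carrier V" "n' \<in> carrier V" "l \<in> carrier V" "l' \<in> carrier V" using that NV LV by auto
    have "n \<ominus> n' = (n \<oplus> l) \<ominus> (n' \<oplus> l)" using c ag_minus_minus by simp
    also have "\<dots> = (l' \<oplus> n') \<ominus> (l \<oplus> n')" using that(5) c by (simp add: a_comm)
    also have "\<dots> = l' \<ominus> l" using c ag_minus_minus by simp
    finally have "n \<ominus> n' \<in> N \<inter> L" using Nm[of n n'] Lm[of l' l] that by auto
    then have "n \<ominus> n' = \<zero>" using NL by auto
    then show ?thesis using c ag_eq_minus by simp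
  qed
  define e where "e = (\<lambda>x\<in>carrier V. SOME n. n \<in> N \<and> (\<exists>l\<in>L. x = n \<oplus> l))"
  have e1: "e x \<in> N \<and> (\<exists>l\<in>L. x = e x \<oplus> l)" if "x \<in> carrier V" for x
  proof -
    have "\<exists>n. n \<in> N \<and> (\<exists>l\<in>L. x = n \<oplus> l)" using dec[OF that] by blast
    then have "(SOME n. n \<in> N \<and> (\<exists>l\<in>L. x = n \<oplus> l)) \<in> N \<and>
       (\<exists>l\<in>L. x = (SOME n. n \<in> N \<and> (\<exists>l\<in>L. x = n \<oplus> l)) \<oplus> l)" by (rule someI_ex)
    then show ?thesis unfolding e_def using that by simp
  qed
  have e2: "e x = n" if xv: "x \<in> carrier V" and nN: "n \<in> N" and lL: "l \<in> L" and xe: "x = n \<oplus> l" for x n l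
  proof -
    obtain l0 where l0: "e x \<in> N" "l0 \<in> L" "x = e x \<oplus> l0" using e1[OF xv] by blast
    show ?thesis using uniq[OF l0(1) nN l0(2) lL] l0(3) xe by simp
  qed
  have eV: "e x \<in> carrier V" if "x \<in> carrier V" for x using e1[OF that] NV by blast
  have ehom: "e \<in> mhom A V V"
  proof (rule mhomI)
    show "\<And>x. x \<in> carrier V \<Longrightarrow> e x \<in> carrier V" by (rule eV)
    show "\<And>x. x \<notin> carrier V \<Longrightarrow> e x = undefined" by (simp add: e_def)
  next
    fix x y assume xy: "x \<in> carrier V" "y \<in> carrier V"
    obtain lx where lx: "lx \<in> L" "x = e x \<oplus> lx" using e1[OF xy(1)] by blast
    obtain ly where ly: "ly \<in> L" "y = e y \<oplus> ly" using e1[OF xy(2)] by blast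
    have c: "e x \<in> carrier V" "e y \<in> carrier V" "lx \<in> carrier V" "ly \<in> carrier V"
      using eV xy lx ly LV by auto
    have "x \<oplus> y = (e x \<oplus> e y) \<oplus> (lx \<oplus> ly)" using lx ly c by (metis a_assoc a_closed a_comm)
    moreover have "e x \<oplus> e y \<in> N" using N e1 xy unfolding is_submod_def by blast
    moreover have "lx \<oplus> ly \<in> L" using L lx ly unfolding is_submod_def by blast
    ultimately show "e (x \<oplus> y) = e x \<oplus> e y" using e2 xy by blast
  next
    fix a x assume ax: "a \<in> carrier A" "x \<in> carrier V"
    obtain lx where lx: "lx \<in> L" "x = e x \<oplus> lx" using e1[OF ax(2)] by blast
    have c: "e x \<in> carrier V" "lx \<in> carrier V" using eV ax lx LV by auto
    have "smult V a x = smult V a (e x) \<oplus> smult V a lx" using lx c ax smult_add by metis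
    moreover have "smult V a (e x) \<in> N" using N e1 ax unfolding is_submod_def by blast
    moreover have "smult V a lx \<in> L" using L lx ax unfolding is_submod_def by blast
    ultimately show "e (smult V a x) = smult V a (e x)" using e2 ax by blast
  qed
  have "\<forall>x\<in>N. e x = x"
  proof
    fix x assume "x \<in> N"
    moreover have "\<zero> \<in> L" using L by (simp add: is_submod_def)
    ultimately show "e x = x" using e2[of x x \<zero>] NV by auto
  qed
  then show ?thesis using ehom e1 by blast
qed

lemma submod_ag:
  assumes "is_submod A V N"
  shows "abelian_group (submod V N)"
proof -
  have NV: "N \<subseteq> carrier V" using assms by (simp add: is_submod_def)
  show ?thesis
  proof (rule abelian_groupI)
    show "\<And>x y. x \<in> carrier (submod V N) \<Longrightarrow> y \<in> carrier (submod V N) \<Longrightarrow>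
      x \<oplus>\<^bsub>submod V N\<^esub> y \<in> carrier (submod V N)"
      using assms by (simp add: is_submod_def)
    show "\<zero>\<^bsub>submod V N\<^esub> \<in> carrier (submod V N)" using assms by (simp add: is_submod_def)
    show "\<And>x y z. x \<in> carrier (submod V N) \<Longrightarrow> y \<in> carrier (submod V N) \<Longrightarrow> z \<in> carrier (submod V N) \<Longrightarrow>
      x \<oplus>\<^bsub>submod V N\<^esub> y \<oplus>\<^bsub>submod V N\<^esub> z = x \<oplus>\<^bsub>submod V N\<^esub> (y \<oplus>\<^bsub>submod V N\<^esub> z)"
      using NV by (simp add: a_assoc subset_iff)
    show "\<And>x y. x \<in> carrier (submod V N) \<Longrightarrow> y \<in> carrier (submod V N) \<Longrightarrow>
      x \<oplus>\<^bsub>submod V N\<^esub> y = y \<oplus>\<^bsub>submod V N\<^esub> x"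
      using NV by (simp add: a_comm subset_iff)
    show "\<And>x. x \<in> carrier (submod V N) \<Longrightarrow> \<zero>\<^bsub>submod V N\<^esub> \<oplus>\<^bsub>submod V N\<^esub> x = x"
      using NV by (simp add: subset_iff)
    show "\<And>x. x \<in> carrier (submod V N) \<Longrightarrow> \<exists>y\<in>carrier (submod V N). y \<oplus>\<^bsub>submod V N\<^esub> x = \<zero>\<^bsub>submod V N\<^esub>"
      using assms NV unfolding is_submod_def by (metis in_mono l_neg submod_simps(1,2,3))
  qed
qed

lemma mhom_submod_iff:
  assumes "N \<subseteq> carrier V"
  shows "g \<in> mhom A V (submod V N) \<longleftrightarrow> g \<in> mhom A V V \<and> (\<forall>x\<in>carrier V. g x \<in> N)"
  using assms unfolding mhom_def by (auto simp: PiE_def Pi_def)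

lemma kernel_submod:
  "f \<in> mhom A V V \<Longrightarrow> is_submod A V (mker V V f)"
  unfolding is_submod_def mker_def
  by (auto simp: hZ hN mhomD(3,4))

end

locale RM = fixes R :: "'r ring" and M :: "('r, 'm) module" (structure)
  assumes ringR: "ring R" and rmodM: "rmod R M"
begin

sublocale lm "opp R" M using rmodM by (simp add: rmod_def lm_def)

abbreviation "S \<equiv> End_ring (opp R) M"

lemma S_mult_apply[simp]: "x \<in> carrier M \<Longrightarrow> mult S f g x = f (g x)" by (simp add: End_ring_simps)
lemma S_add_apply[simp]: "x \<in> carrier M \<Longrightarrow> add S f g x = f x \<oplus> g x" by (simp add: End_ring_simps)
lemma S_one_apply[simp]: "x \<in> carrier M \<Longrightarrow> one S x = x" by (simp add: End_ring_simps)
lemma S_zero_apply[simp]: "x \<in> carrier M \<Longrightarrow> zero S x = \<zero>" by (simp add: End_ring_simps)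

lemma S_ext_iff: "f \<in> carrier S \<Longrightarrow> g \<in> carrier S \<Longrightarrow> f = g \<longleftrightarrow> (\<forall>x\<in>carrier M. f x = g x)"
  using hom_ext by auto

lemma S_mult_closed[simp]: "f \<in> mhom (opp R) M M \<Longrightarrow> g \<in> mhom (opp R) M M \<Longrightarrow> mult S f g \<in> mhom (opp R) M M"
  unfolding End_ring_simps by (auto intro: hom_comp)
lemma S_add_closed[simp]: "f \<in> mhom (opp R) M M \<Longrightarrow> g \<in> mhom (opp R) M M \<Longrightarrow> add S f g \<in> mhom (opp R) M M"
  unfolding End_ring_simps by (auto intro: hom_add)
lemma S_one_closed[simp]: "one S \<in> mhom (opp R) M M" unfolding End_ring_simps by (auto intro: hom_id)
lemma S_zero_closed[simp]: "zero S \<in> mhom (opp R) M M" unfolding End_ring_simps by (auto intro: hom_zerof)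

lemma one_mult[simp]: "f \<in> carrier S \<Longrightarrow> mult S (one S) f = f"
  by (subst S_ext_iff) (auto simp: hcb)
lemma mult_one[simp]: "f \<in> carrier S \<Longrightarrow> mult S f (one S) = f"
  by (subst S_ext_iff) auto

lemma rS_ag: "abelian_group (ring_rmod S)"
  by (rule End_ag) (auto simp: End_ring_simps)
lemma lS_ag: "abelian_group (ring_lmod S)"
  by (rule End_ag) (auto simp: End_ring_simps)
lemma rS_ainv: "f \<in> carrier S \<Longrightarrow> \<ominus>\<^bsub>ring_rmod S\<^esub> f = (\<lambda>x\<in>carrier M. \<ominus> f x)"
  by (rule End_ainv) (auto simp: End_ring_simps)
lemma lS_ainv: "f \<in> carrier S \<Longrightarrow> \<ominus>\<^bsub>ring_lmod S\<^esub> f = (\<lambda>x\<in>carrier M. \<ominus> f x)"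
  by (rule End_ainv) (auto simp: End_ring_simps)

lemma rS_endo:
  assumes "\<phi> \<in> mhom (opp S) (ring_rmod S) (ring_rmod S)" "t \<in> carrier S"
  shows "\<phi> t = mult S (\<phi> (one S)) t"
proof -
  have "\<phi> t = \<phi> (smult (ring_rmod S) t (one S))" using assms(2) by simp
  also have "\<dots> = smult (ring_rmod S) t (\<phi> (one S))"
    using mhomD(4)[OF assms(1), of t "one S"] assms(2) by simp
  finally show ?thesis by simp
qed

lemma lS_endo:
  assumes "\<phi> \<in> mhom S (ring_lmod S) (ring_lmod S)" "t \<in> carrier S"
  shows "\<phi> t = mult S t (\<phi> (one S))"
proof -
  have "\<phi> t = \<phi> (smult (ring_lmod S) t (one S))" using assms(2) by simp
  also have "\<dots> = smult (ring_lmod S) t (\<phi> (one S))"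
    using mhomD(4)[OF assms(1), of t "one S"] assms(2) by simp
  finally show ?thesis by simp
qed

lemma rS_endo_closed[simp]: "\<phi> \<in> mhom (opp S) (ring_rmod S) (ring_rmod S) \<Longrightarrow> \<phi> (one S) \<in> mhom (opp R) M M"
  using mhomD(1)[of \<phi> "opp S" "ring_rmod S" "ring_rmod S" "one S"] by simp
lemma lS_endo_closed[simp]: "\<phi> \<in> mhom S (ring_lmod S) (ring_lmod S) \<Longrightarrow> \<phi> (one S) \<in> mhom (opp R) M M"
  using mhomD(1)[of \<phi> "S" "ring_lmod S" "ring_lmod S" "one S"] by simp

lemma lmult_endo: "f \<in> carrier S \<Longrightarrow> (\<lambda>t\<in>carrier S. mult S f t) \<in> mhom (opp S) (ring_rmod S) (ring_rmod S)"
  by (rule mhomI) (auto simp: S_ext_iff hcb mhomD(3))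

lemma rmult_endo: "f \<in> carrier S \<Longrightarrow> (\<lambda>t\<in>carrier S. mult S t f) \<in> mhom S (ring_lmod S) (ring_lmod S)"
  by (rule mhomI) (auto simp: S_ext_iff hcb mhomD(3))

end


context RM
begin

abbreviation "EM \<equiv> mhom (opp R) M M"

lemma zeroS_iff: "f \<in> EM \<Longrightarrow> g \<in> EM \<Longrightarrow> mult S f g = zero S \<longleftrightarrow> (\<forall>x\<in>carrier M. f (g x) = \<zero>)"
  by (subst S_ext_iff) auto

lemma mult_eq_iff: "f \<in> EM \<Longrightarrow> g \<in> EM \<Longrightarrow> h \<in> EM \<Longrightarrow> mult S f g = h \<longleftrightarrow> (\<forall>x\<in>carrier M. f (g x) = h x)"
  by (subst S_ext_iff) auto

lemma rS_sm: "b \<in> carrier (opp S) \<Longrightarrow> x \<in> carrier (ring_rmod S) \<Longrightarrow> smult (ring_rmod S) b x \<in> carrier (ring_rmod S)"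
  by simp

lemma rS_sm0: "b \<in> carrier (opp S) \<Longrightarrow> smult (ring_rmod S) b \<zero>\<^bsub>ring_rmod S\<^esub> = \<zero>\<^bsub>ring_rmod S\<^esub>"
  using hcb[of b] by (simp add: S_ext_iff)

lemma lS_sm: "b \<in> carrier S \<Longrightarrow> x \<in> carrier (ring_lmod S) \<Longrightarrow> smult (ring_lmod S) b x \<in> carrier (ring_lmod S)"
  by simp

lemma lS_sm0: "b \<in> carrier S \<Longrightarrow> smult (ring_lmod S) b \<zero>\<^bsub>ring_lmod S\<^esub> = \<zero>\<^bsub>ring_lmod S\<^esub>"
  by (simp add: S_ext_iff hZ)

lemma M_sm0: "b \<in> carrier (opp R) \<Longrightarrow> smult M b \<zero> = \<zero>" by simp

lemma ker_sub: "mker M M f \<subseteq> carrier M" by (auto simp: mker_def)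

lemma A1:
  assumes ssr: "strongly_self_rickart (opp R) M"
  shows "strongly_self_rickart (opp S) (ring_rmod S)"
  unfolding strongly_self_rickart_def
proof (intro ballI conjI)
  fix \<phi> assume \<phi>: "\<phi> \<in> mhom (opp S) (ring_rmod S) (ring_rmod S)"
  define t where "t = \<phi> (one S)"
  have t: "t \<in> EM" using \<phi> by (simp add: t_def)
  define N where "N = mker M M t"
  have K: "mker (ring_rmod S) (ring_rmod S) \<phi> = {s \<in> EM. \<forall>x\<in>carrier M. s x \<in> N}"
  proof -
    have "\<phi> s = zero S \<longleftrightarrow> (\<forall>x\<in>carrier M. s x \<in> N)" if s: "s \<in> EM" for s
      using rS_endo[OF \<phi>, of s] t zeroS_iff[OF t s] s by (auto simp: t_def N_def mker_def hcb[OF s])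
    then show ?thesis by (auto simp: mker_def)
  qed
  have Nfi: "dsummand (opp R) M N" "fully_invariant (opp R) M N"
    using ssr t unfolding strongly_self_rickart_def N_def by auto
  obtain p where p: "p \<in> EM" "\<forall>x\<in>carrier M. p x \<in> N" "\<forall>x\<in>N. p x = x"
    using summand_proj[OF Nfi(1)] by blast
  define \<psi> where "\<psi> = (\<lambda>s\<in>carrier S. mult S p s)"
  have \<psi>: "\<psi> \<in> mhom (opp S) (ring_rmod S) (ring_rmod S)" unfolding \<psi>_def using p(1) by (intro lmult_endo) simp
  have NM: "N \<subseteq> carrier M" by (simp add: N_def ker_sub)
  have pp: "\<And>x. x \<in> carrier M \<Longrightarrow> p (p x) = p x" using p by auto
  have idem: "\<And>s. s \<in> carrier (ring_rmod S) \<Longrightarrow> \<psi> (\<psi> s) = \<psi> s"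
    unfolding \<psi>_def using p(1) by (auto simp: S_ext_iff pp hcb)
  have eqK: "mker (ring_rmod S) (ring_rmod S) \<phi> = \<psi> ` carrier (ring_rmod S)"
  proof
    show "mker (ring_rmod S) (ring_rmod S) \<phi> \<subseteq> \<psi> ` carrier (ring_rmod S)"
    proof
      fix s assume "s \<in> mker (ring_rmod S) (ring_rmod S) \<phi>"
      then have s: "s \<in> EM" "\<forall>x\<in>carrier M. s x \<in> N" using K by auto
      then have "\<psi> s = s" unfolding \<psi>_def using p by (auto simp: S_ext_iff)
      then show "s \<in> \<psi> ` carrier (ring_rmod S)" using s by (metis image_eqI ring_rmod_simps(1) End_carrier)
    qed
    show "\<psi> ` carrier (ring_rmod S) \<subseteq> mker (ring_rmod S) (ring_rmod S) \<phi>"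
      unfolding K \<psi>_def using p by (auto simp: hcb)
  qed
  show "dsummand (opp S) (ring_rmod S) (mker (ring_rmod S) (ring_rmod S) \<phi>)"
    unfolding eqK by (rule idem_summand(1)[OF rS_ag rS_sm rS_sm0 \<psi> idem])
  show "fully_invariant (opp S) (ring_rmod S) (mker (ring_rmod S) (ring_rmod S) \<phi>)"
    unfolding fully_invariant_def K
  proof (intro ballI subsetI)
    fix h u assume h: "h \<in> mhom (opp S) (ring_rmod S) (ring_rmod S)"
      and u: "u \<in> h ` {s \<in> EM. \<forall>x\<in>carrier M. s x \<in> N}"
    then obtain s where s: "s \<in> EM" "\<forall>x\<in>carrier M. s x \<in> N" "u = h s" by auto
    have h1: "h (one S) \<in> EM" using h by simp
    have "u = mult S (h (one S)) s" using rS_endo[OF h, of s] s by simp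
    moreover have "\<forall>x\<in>carrier M. h (one S) (s x) \<in> N"
      using Nfi(2) h1 s(2) unfolding fully_invariant_def by blast
    ultimately show "u \<in> {s \<in> EM. \<forall>x\<in>carrier M. s x \<in> N}" using s h1 by auto
  qed
qed

lemma B1:
  assumes ssr: "strongly_self_rickart (opp S) (ring_rmod S)" and f: "f \<in> EM"
  shows "\<exists>e\<in>EM. (\<forall>x\<in>carrier M. e (e x) = e x) \<and> (\<forall>x\<in>carrier M. f (e x) = \<zero>) \<and>
    (\<forall>h\<in>EM. \<forall>x\<in>carrier M. e (h x) = h (e x)) \<and>
    (\<forall>g\<in>EM. (\<forall>x\<in>carrier M. f (g x) = \<zero>) \<longrightarrow> (\<forall>x\<in>carrier M. e (g x) = g x))"
proof -
  interpret W: abelian_group "ring_rmod S" by (rule rS_ag)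
  define \<phi> where "\<phi> = (\<lambda>t\<in>carrier S. mult S f t)"
  have \<phi>: "\<phi> \<in> mhom (opp S) (ring_rmod S) (ring_rmod S)" unfolding \<phi>_def using f by (intro lmult_endo) simp
  define K where "K = mker (ring_rmod S) (ring_rmod S) \<phi>"
  have K: "K = {t \<in> EM. \<forall>x\<in>carrier M. f (t x) = \<zero>}"
    unfolding K_def mker_def \<phi>_def using f by (auto simp: zeroS_iff)
  have Kd: "dsummand (opp S) (ring_rmod S) K" and Kf: "fully_invariant (opp S) (ring_rmod S) K"
    using ssr \<phi> unfolding strongly_self_rickart_def K_def by auto
  obtain L where Ks: "is_submod (opp S) (ring_rmod S) K" and Ls: "is_submod (opp S) (ring_rmod S) L"
    and KL: "K \<inter> L = {zero S}" and dec: "\<forall>x\<in>carrier S. \<exists>n\<in>K. \<exists>l\<in>L. x = add S n l"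
    using Kd unfolding dsummand_def by auto
  obtain e l where e: "e \<in> K" and l: "l \<in> L" and one: "one S = add S e l"
    using dec by (metis S_one_closed End_carrier)
  have LS: "L \<subseteq> EM" using Ls by (auto simp: is_submod_def)
  have eM: "e \<in> EM" using e K by auto
  have lM: "l \<in> EM" using l LS by auto
  have fe: "\<forall>x\<in>carrier M. f (e x) = \<zero>" using e K by auto
  have ann: "mult S e g = g" if g: "g \<in> EM" "\<forall>x\<in>carrier M. f (g x) = \<zero>" for g
  proof -
    have gK: "g \<in> K" using g K by auto
    have "g = mult S (one S) g" using g by simp
    also have "\<dots> = add S (mult S e g) (mult S l g)" unfolding one using eM lM g
      by (simp add: S_ext_iff hcb[OF g(1)])
    finally have g1: "g = add S (mult S e g) (mult S l g)" .
    have egK: "mult S e g \<in> K" using Ks e g unfolding is_submod_def by auto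
    have lgL: "mult S l g \<in> L" using Ls l g unfolding is_submod_def by auto
    have c: "mult S e g \<in> EM" "mult S l g \<in> EM" using eM lM g by auto
    have "mult S l g = g \<ominus>\<^bsub>ring_rmod S\<^esub> mult S e g"
      using W.ag_add_minus2[of "mult S e g" "mult S l g"] c g1 by simp
    moreover have "g \<ominus>\<^bsub>ring_rmod S\<^esub> mult S e g \<in> K"
      using Ks gK egK unfolding is_submod_def a_minus_def by simp
    ultimately have "mult S l g \<in> K \<inter> L" using lgL by simp
    then have lg0: "mult S l g = zero S" using KL by auto
    have "\<forall>x\<in>carrier M. e (g x) = g x"
    proof
      fix x assume x: "x \<in> carrier M"
      have "g x = add S (mult S e g) (mult S l g) x" using fun_cong[OF g1, of x] .
      also have "\<dots> = e (g x) \<oplus> l (g x)" using x by simp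
      also have "l (g x) = mult S l g x" using x by simp
      also have "\<dots> = \<zero>" using lg0 x by simp
      finally show "e (g x) = g x" using x eM hcb[OF g(1)] hcb[OF eM] by simp
    qed
    then show ?thesis using g eM by (simp add: mult_eq_iff)
  qed
  have ann': "\<forall>x\<in>carrier M. e (g x) = g x" if "g \<in> EM" "\<forall>x\<in>carrier M. f (g x) = \<zero>" for g
    using ann[OF that] that(1) eM by (simp add: mult_eq_iff)
  have ee: "\<forall>x\<in>carrier M. e (e x) = e x" using ann'[OF eM fe] .
  have c1: "e (h (e x)) = h (e x)" if h: "h \<in> EM" and x: "x \<in> carrier M" for h x
  proof -
    have "(\<lambda>t\<in>carrier S. mult S h t) \<in> mhom (opp S) (ring_rmod S) (ring_rmod S)"
      using h by (intro lmult_endo) simp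
    then have "(\<lambda>t\<in>carrier S. mult S h t) e \<in> K" using Kf e unfolding fully_invariant_def by blast
    then have "mult S h e \<in> K" using eM by simp
    then have "\<forall>y\<in>carrier M. f (h (e y)) = \<zero>" using K x by auto
    then have "\<forall>y\<in>carrier M. e (h (e y)) = h (e y)"
      using ann'[of "mult S h e"] h eM by simp
    then show ?thesis using x by blast
  qed
  define \<phi>e where "\<phi>e = (\<lambda>t\<in>carrier S. mult S e t)"
  have \<phi>e: "\<phi>e \<in> mhom (opp S) (ring_rmod S) (ring_rmod S)" unfolding \<phi>e_def using eM by (intro lmult_endo) simp
  have Kef: "fully_invariant (opp S) (ring_rmod S) (mker (ring_rmod S) (ring_rmod S) \<phi>e)"
    using ssr \<phi>e unfolding strongly_self_rickart_def by auto
  define t0 where "t0 = (\<lambda>x\<in>carrier M. x \<ominus> e x)"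
  have t0: "t0 \<in> EM"
  proof -
    have "(\<lambda>x\<in>carrier M. (\<lambda>x\<in>carrier M. x) x \<ominus> e x) = t0"
      unfolding t0_def by (rule restrict_ext) simp
    then show ?thesis using hom_minusf[OF hom_id eM] by simp
  qed
  have t0K: "t0 \<in> mker (ring_rmod S) (ring_rmod S) \<phi>e"
    unfolding mker_def \<phi>e_def using t0 eM
    by (simp add: zeroS_iff t0_def hM ee ag_minus_self hcb[OF eM])
  have c2: "e (h x) = e (h (e x))" if h: "h \<in> EM" and x: "x \<in> carrier M" for h x
  proof -
    have "(\<lambda>t\<in>carrier S. mult S h t) \<in> mhom (opp S) (ring_rmod S) (ring_rmod S)"
      using h by (intro lmult_endo) simp
    then have "(\<lambda>t\<in>carrier S. mult S h t) t0 \<in> mker (ring_rmod S) (ring_rmod S) \<phi>e"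
      using Kef t0K unfolding fully_invariant_def by blast
    then have "mult S h t0 \<in> mker (ring_rmod S) (ring_rmod S) \<phi>e" using t0 by simp
    then have "\<phi>e (mult S h t0) = zero S" by (simp add: mker_def)
    then have "mult S e (mult S h t0) = zero S" using h t0 by (simp add: \<phi>e_def)
    then have "e (h (t0 x)) = \<zero>" using x h t0 eM zeroS_iff[of e "mult S h t0"] by simp
    then have "e (h x \<ominus> h (e x)) = \<zero>" using x h eM by (simp add: t0_def hM hcb[OF eM] hcb[OF h])
    then have "e (h x) \<ominus> e (h (e x)) = \<zero>" using x h eM by (simp add: hM hcb[OF eM] hcb[OF h])
    then show ?thesis using x h eM by (simp add: ag_eq_minus hcb[OF eM] hcb[OF h])
  qed
  have cen: "\<forall>h\<in>EM. \<forall>x\<in>carrier M. e (h x) = h (e x)" using c1 c2 by simp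
  show ?thesis using eM ee fe cen ann' by blast
qed

lemma B2:
  assumes e: "e \<in> EM" "\<forall>x\<in>carrier M. e (e x) = e x" "\<forall>x\<in>carrier M. f (e x) = \<zero>"
    "\<forall>h\<in>EM. \<forall>x\<in>carrier M. e (h x) = h (e x)"
    and fx: "\<forall>x\<in>mker M M f. e x = x"
  shows "dsummand (opp R) M (mker M M f) \<and> fully_invariant (opp R) M (mker M M f)"
proof -
  have eq: "mker M M f = e ` carrier M"
  proof
    show "mker M M f \<subseteq> e ` carrier M"
    proof
      fix x assume x: "x \<in> mker M M f"
      then have "x = e x" using fx by simp
      then show "x \<in> e ` carrier M" using x by (metis image_eqI ker_sub subsetD)
    qed
    show "e ` carrier M \<subseteq> mker M M f" using e(1,3) by (auto simp: mker_def hcb[OF e(1)])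
  qed
  have "dsummand (opp R) M (e ` carrier M)"
    by (rule idem_summand(1)[OF abelian_group_axioms smult_closed M_sm0 e(1)]) (use e(2) in auto)
  moreover have "fully_invariant (opp R) M (e ` carrier M)"
    unfolding fully_invariant_def
  proof (intro ballI subsetI)
    fix h u assume h: "h \<in> EM" and u: "u \<in> h ` e ` carrier M"
    then obtain x where x: "x \<in> carrier M" "u = h (e x)" by auto
    then have "u = e (h x)" using e(4) h by simp
    then show "u \<in> e ` carrier M" using x h by (metis hc image_eqI)
  qed
  ultimately show ?thesis using eq by simp
qed

lemma ker_proj:
  assumes "strongly_self_rickart (opp R) M" "f \<in> EM"
  shows "\<exists>p\<in>EM. (\<forall>x\<in>carrier M. p x \<in> mker M M f) \<and> (\<forall>x\<in>mker M M f. p x = x)"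
  using assms summand_proj unfolding strongly_self_rickart_def by blast

lemma part1_ii:
  "strongly_self_rickart (opp R) M \<longleftrightarrow>
       strongly_self_rickart (opp S) (ring_rmod S) \<and>
       (\<forall>f\<in>carrier S. M_cyclic R M (submod M (mker M M f)))"
proof
  assume ssr: "strongly_self_rickart (opp R) M"
  show "strongly_self_rickart (opp S) (ring_rmod S) \<and> (\<forall>f\<in>carrier S. M_cyclic R M (submod M (mker M M f)))"
  proof (intro conjI ballI)
    show "strongly_self_rickart (opp S) (ring_rmod S)" using A1[OF ssr] .
    fix f assume f: "f \<in> carrier S"
    obtain p where p: "p \<in> EM" "\<forall>x\<in>carrier M. p x \<in> mker M M f" "\<forall>x\<in>mker M M f. p x = x"
      using ker_proj[OF ssr, of f] f by auto
    have "p \<in> mhom (opp R) M (submod M (mker M M f))" using p by (simp add: mhom_submod_iff ker_sub)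
    moreover have "p ` carrier M = mker M M f"
      using p by (auto simp: image_iff) (metis ker_sub subsetD)
    ultimately show "M_cyclic R M (submod M (mker M M f))" unfolding M_cyclic_def by auto
  qed
next
  assume H: "strongly_self_rickart (opp S) (ring_rmod S) \<and> (\<forall>f\<in>carrier S. M_cyclic R M (submod M (mker M M f)))"
  show "strongly_self_rickart (opp R) M"
    unfolding strongly_self_rickart_def
  proof
    fix f assume f: "f \<in> EM"
    obtain e where e: "e \<in> EM" "\<forall>x\<in>carrier M. e (e x) = e x" "\<forall>x\<in>carrier M. f (e x) = \<zero>"
      "\<forall>h\<in>EM. \<forall>x\<in>carrier M. e (h x) = h (e x)"
      "\<forall>g\<in>EM. (\<forall>x\<in>carrier M. f (g x) = \<zero>) \<longrightarrow> (\<forall>x\<in>carrier M. e (g x) = g x)"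
      using B1[OF conjunct1[OF H] f] by blast
    obtain h where h: "h \<in> mhom (opp R) M (submod M (mker M M f))" "h ` carrier M = mker M M f"
      using H f unfolding M_cyclic_def by auto
    have h2: "h \<in> EM" "\<forall>x\<in>carrier M. h x \<in> mker M M f" using h(1) by (auto simp: mhom_submod_iff ker_sub)
    have "\<forall>x\<in>carrier M. e (h x) = h x" using e(5)[rule_format, OF h2(1)] h2(2) by (auto simp: mker_def)
    then have "\<forall>x\<in>mker M M f. e x = x"
    proof (intro ballI)
      fix x assume eh: "\<forall>x\<in>carrier M. e (h x) = h x" and x: "x \<in> mker M M f"
      then obtain y where "y \<in> carrier M" "x = h y" using h(2) by blast
      then show "e x = x" using eh by simp
    qed
    then show "dsummand (opp R) M (mker M M f) \<and> fully_invariant (opp R) M (mker M M f)"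
      using B2[OF e(1-4)] by blast
  qed
qed

lemma part1_iv:
  "strongly_self_rickart (opp R) M \<longleftrightarrow>
       strongly_self_rickart (opp S) (ring_rmod S) \<and>
       (\<forall>f\<in>carrier S. incl_locally_split R M (mker M M f))"
proof
  assume ssr: "strongly_self_rickart (opp R) M"
  show "strongly_self_rickart (opp S) (ring_rmod S) \<and> (\<forall>f\<in>carrier S. incl_locally_split R M (mker M M f))"
  proof (intro conjI ballI)
    show "strongly_self_rickart (opp S) (ring_rmod S)" using A1[OF ssr] .
    fix f assume f: "f \<in> carrier S"
    obtain p where p: "p \<in> EM" "\<forall>x\<in>carrier M. p x \<in> mker M M f" "\<forall>x\<in>mker M M f. p x = x"
      using ker_proj[OF ssr, of f] f by auto
    have "p \<in> mhom (opp R) M (submod M (mker M M f))" using p by (simp add: mhom_submod_iff ker_sub)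
    then show "incl_locally_split R M (mker M M f)" unfolding incl_locally_split_def using p(3) by auto
  qed
next
  assume H: "strongly_self_rickart (opp S) (ring_rmod S) \<and> (\<forall>f\<in>carrier S. incl_locally_split R M (mker M M f))"
  show "strongly_self_rickart (opp R) M"
    unfolding strongly_self_rickart_def
  proof
    fix f assume f: "f \<in> EM"
    obtain e where e: "e \<in> EM" "\<forall>x\<in>carrier M. e (e x) = e x" "\<forall>x\<in>carrier M. f (e x) = \<zero>"
      "\<forall>h\<in>EM. \<forall>x\<in>carrier M. e (h x) = h (e x)"
      "\<forall>g\<in>EM. (\<forall>x\<in>carrier M. f (g x) = \<zero>) \<longrightarrow> (\<forall>x\<in>carrier M. e (g x) = g x)"
      using B1[OF conjunct1[OF H] f] by blast
    have "\<forall>a\<in>mker M M f. e a = a"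
    proof
      fix a assume a: "a \<in> mker M M f"
      obtain h where h: "h \<in> mhom (opp R) M (submod M (mker M M f))" "h a = a"
        using H f a unfolding incl_locally_split_def by auto
      have h2: "h \<in> EM" "\<forall>x\<in>carrier M. h x \<in> mker M M f" using h(1) by (auto simp: mhom_submod_iff ker_sub)
      have "\<forall>x\<in>carrier M. e (h x) = h x" using e(5)[rule_format, OF h2(1)] h2(2) by (auto simp: mker_def)
      then show "e a = a" using h(2) a by (metis ker_sub subsetD)
    qed
    then show "dsummand (opp R) M (mker M M f) \<and> fully_invariant (opp R) M (mker M M f)"
      using B2[OF e(1-4)] by blast
  qed
qed

lemma part1_v:
  "strongly_self_rickart (opp R) M \<longleftrightarrow>
       strongly_self_rickart (opp S) (ring_rmod S) \<and> k_quasi_retractable R M"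
proof
  assume ssr: "strongly_self_rickart (opp R) M"
  show "strongly_self_rickart (opp S) (ring_rmod S) \<and> k_quasi_retractable R M"
    unfolding k_quasi_retractable_def
  proof (intro conjI ballI impI)
    show "strongly_self_rickart (opp S) (ring_rmod S)" using A1[OF ssr] .
    fix f assume f: "f \<in> carrier S" and nz: "mker M M f \<noteq> {\<zero>}"
    obtain p where p: "p \<in> EM" "\<forall>x\<in>carrier M. p x \<in> mker M M f" "\<forall>x\<in>mker M M f. p x = x"
      using ker_proj[OF ssr, of f] f by auto
    have "\<zero> \<in> mker M M f" using f hZ[of f] by (simp add: mker_def)
    then obtain a where a: "a \<in> mker M M f" "a \<noteq> \<zero>" using nz by blast
    have "p \<in> mhom (opp R) M (submod M (mker M M f))" using p by (simp add: mhom_submod_iff ker_sub)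
    moreover have "a \<in> carrier M" "p a \<noteq> \<zero>" using a p ker_sub by auto
    ultimately show "\<exists>h\<in>mhom (opp R) M (submod M (mker M M f)). \<exists>x\<in>carrier M. h x \<noteq> \<zero>" by blast
  qed
next
  assume H: "strongly_self_rickart (opp S) (ring_rmod S) \<and> k_quasi_retractable R M"
  show "strongly_self_rickart (opp R) M"
    unfolding strongly_self_rickart_def
  proof
    fix f assume f: "f \<in> EM"
    obtain e where e: "e \<in> EM" "\<forall>x\<in>carrier M. e (e x) = e x" "\<forall>x\<in>carrier M. f (e x) = \<zero>"
      "\<forall>h\<in>EM. \<forall>x\<in>carrier M. e (h x) = h (e x)"
      "\<forall>g\<in>EM. (\<forall>x\<in>carrier M. f (g x) = \<zero>) \<longrightarrow> (\<forall>x\<in>carrier M. e (g x) = g x)"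
      using B1[OF conjunct1[OF H] f] by blast
    have "\<forall>a\<in>mker M M f. e a = a"
    proof (rule ccontr)
      assume "\<not> (\<forall>a\<in>mker M M f. e a = a)"
      then obtain a where a: "a \<in> carrier M" "f a = \<zero>" "e a \<noteq> a" by (auto simp: mker_def)
      define g where "g = add S f e"
      have g: "g \<in> EM" using f e(1) by (simp add: g_def)
      define y where "y = a \<ominus> e a"
      have y: "y \<in> carrier M" "f y = \<zero>" "e y = \<zero>" "y \<noteq> \<zero>"
        using a f e(1-3) by (auto simp: y_def hM hcb[OF e(1)] hcb[OF f] ag_minus_self ag_eq_minus)
      have "y \<in> mker M M g" using y by (simp add: mker_def g_def)
      then have nz2: "mker M M g \<noteq> {\<zero>}" using y by auto
      have "\<exists>h\<in>mhom (opp R) M (submod M (mker M M g)). \<exists>x\<in>carrier M. h x \<noteq> \<zero>"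
        using H g nz2 unfolding k_quasi_retractable_def by simp
      then obtain h x where h: "h \<in> mhom (opp R) M (submod M (mker M M g))" and x: "x \<in> carrier M" "h x \<noteq> \<zero>"
        by blast
      have kg: "f z = \<zero> \<and> e z = \<zero>" if z: "z \<in> mker M M g" for z
      proof -
        have zc: "z \<in> carrier M" "f z \<oplus> e z = \<zero>" using z by (auto simp: mker_def g_def)
        have "e (f z \<oplus> e z) = \<zero>" using zc(2) hZ[OF e(1)] by simp
        moreover have "e (f z \<oplus> e z) = e (f z) \<oplus> e z"
          using mhomD(3)[OF e(1), of "f z" "e z"] e(2) zc(1) hcb[OF f] hcb[OF e(1)] by simp
        ultimately have "e (f z) \<oplus> e z = \<zero>" by simp
        moreover have "e (f z) = \<zero>" using e(3) e(4)[rule_format, OF f zc(1)] zc by auto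
        ultimately have ez: "e z = \<zero>" using zc e(1,2) by (simp add: hcb[OF e(1)])
        then show ?thesis using zc f by (simp add: hcb[OF e(1)] hcb[OF f])
      qed
      have h2: "h \<in> EM" "\<forall>x\<in>carrier M. h x \<in> mker M M g" using h by (auto simp: mhom_submod_iff ker_sub)
      have "\<forall>z\<in>carrier M. f (h z) = \<zero>" using h2 kg by blast
      then have "e (h x) = h x" using e(5) h2 x by blast
      moreover have "e (h x) = \<zero>" using h2 kg x by blast
      ultimately show False using x by simp
    qed
    then show "dsummand (opp R) M (mker M M f) \<and> fully_invariant (opp R) M (mker M M f)"
      using B2[OF e(1-4)] by blast
  qed
qed

end


context abelian_group
begin

lemma sub_nat_pow:
  assumes T: "T \<subseteq> carrier G" "\<zero> \<in> T" "\<And>x y. x \<in> T \<Longrightarrow> y \<in> T \<Longrightarrow> x \<oplus> y \<in> T"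
    and x: "x \<in> T"
  shows "[(n::nat)] \<cdot> x \<in> T"
proof (induction n)
  case 0 then show ?case using T by simp
next
  case (Suc n)
  have "[Suc n] \<cdot> x = [n] \<cdot> x \<oplus> x" by (rule add.nat_pow_Suc)
  then show ?case using Suc T x by simp
qed

lemma sub_int_pow:
  assumes T: "T \<subseteq> carrier G" "\<zero> \<in> T" "\<And>x y. x \<in> T \<Longrightarrow> y \<in> T \<Longrightarrow> x \<oplus> y \<in> T"
    "\<And>x. x \<in> T \<Longrightarrow> \<ominus> x \<in> T"
    and x: "x \<in> T"
  shows "[(n::int)] \<cdot> x \<in> T"
proof (cases "n \<ge> 0")
  case True
  then show ?thesis using add_pow_int_ge[OF True, of G x] sub_nat_pow[OF T(1-3) x, of "nat n"] by simp
next
  case False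
  then have "n < 0" by simp
  then show ?thesis using add_pow_int_lt[OF \<open>n < 0\<close>, of G x] sub_nat_pow[OF T(1-3) x, of "nat (- n)"] T(4) by simp
qed

lemma sub_finsum:
  assumes T: "T \<subseteq> carrier G" "\<zero> \<in> T" "\<And>x y. x \<in> T \<Longrightarrow> y \<in> T \<Longrightarrow> x \<oplus> y \<in> T"
    and F: "finite F" and h: "\<And>i. i \<in> F \<Longrightarrow> h i \<in> T"
  shows "finsum G h F \<in> T"
  using F h
proof (induction F rule: finite_induct)
  case empty then show ?case using T by simp
next
  case (insert a F)
  have hc: "h \<in> F \<rightarrow> carrier G" "h a \<in> carrier G" using insert T by auto
  have "finsum G h (insert a F) = h a \<oplus> finsum G h F"
    by (rule finsum_insert) (use insert hc in auto)
  then show ?case using insert T by simp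
qed

end

section \<open>Part (1)(iii): Stat\<close>

context RM
begin

lemma free_on_add: "a \<in> free_on Q \<Longrightarrow> b \<in> free_on Q \<Longrightarrow> a + b \<in> free_on Q"
proof -
  assume a: "a \<in> free_on Q" and b: "b \<in> free_on Q"
  have "{p. (a + b) p \<noteq> 0} \<subseteq> {p. a p \<noteq> 0} \<union> {p. b p \<noteq> 0}" by auto
  then show ?thesis using a b unfolding free_on_def by (auto intro: finite_subset)
qed

lemma free_on_diff: "a \<in> free_on Q \<Longrightarrow> b \<in> free_on Q \<Longrightarrow> a - b \<in> free_on Q"
proof -
  assume a: "a \<in> free_on Q" and b: "b \<in> free_on Q"
  have "{p. (a - b) p \<noteq> 0} \<subseteq> {p. a p \<noteq> 0} \<union> {p. b p \<noteq> 0}" by auto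
  then show ?thesis using a b unfolding free_on_def by (auto intro: finite_subset)
qed

lemma free_on_delta: "q \<in> Q \<Longrightarrow> delta q \<in> free_on Q"
proof -
  assume "q \<in> Q"
  moreover have "{p. delta q p \<noteq> 0} = {q}" by (auto simp: delta_def)
  ultimately show ?thesis unfolding free_on_def by simp
qed

lemma free_on_zero: "0 \<in> free_on Q"
  by (simp add: free_on_def)

lemma free_on_upd: "c \<in> free_on Q \<Longrightarrow> c(q := 0) \<in> free_on Q"
proof -
  assume c: "c \<in> free_on Q"
  have "{p. (c(q := 0)) p \<noteq> 0} \<subseteq> {p. c p \<noteq> 0}" by auto
  then show ?thesis using c unfolding free_on_def by (auto intro: finite_subset)
qed

lemma zspan_add: "a \<in> zspan G \<Longrightarrow> b \<in> zspan G \<Longrightarrow> a + b \<in> zspan G"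
proof -
  assume a: "a \<in> zspan G" and b: "b \<in> zspan G"
  have z: "(0::_ \<Rightarrow> int) \<in> zspan G" using zspan_zero[of G] by (simp add: zero_fun_def)
  have "0 - b \<in> zspan G" using zspan_diff[OF z b] .
  then have "a - (0 - b) \<in> zspan G" using zspan_diff[OF a] by blast
  then show ?thesis by simp
qed

lemma zspan_0: "(0::_ \<Rightarrow> int) \<in> zspan G"
  using zspan_zero[of G] by (simp add: zero_fun_def)

lemma zspan_neg: "a \<in> zspan G \<Longrightarrow> - a \<in> zspan G"
  using zspan_diff[OF zspan_0] by fastforce

lemma zspan_scale: "a \<in> zspan G \<Longrightarrow> (\<lambda>q. n * a q) \<in> zspan G"
proof (induction n rule: int_induct[where k=0])
  case base then show ?case using zspan_0 by (simp add: zero_fun_def)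
next
  case (step1 i)
  have "(\<lambda>q. (i + 1) * a q) = (\<lambda>q. i * a q) + a" by (auto simp: fun_eq_iff algebra_simps)
  then show ?case using step1 zspan_add by metis
next
  case (step2 i)
  have "(\<lambda>q. (i - 1) * a q) = (\<lambda>q. i * a q) - a" by (auto simp: fun_eq_iff algebra_simps)
  then show ?case using step2 zspan_diff by metis
qed

end

locale RMf = RM +
  fixes f assumes fEM: "f \<in> mhom (opp R) M M"
begin

abbreviation "NN \<equiv> mker M M f"
abbreviation "VV \<equiv> submod M NN"
abbreviation "PP \<equiv> mhom (opp R) M VV"
abbreviation "QQ \<equiv> PP \<times> carrier M"
abbreviation "ev \<equiv> tens_eval VV"
abbreviation "GG \<equiv> tens_rel R M VV"
abbreviation "ZZ \<equiv> zspan GG"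

definition ww :: "('m \<Rightarrow> 'm) \<times> 'm \<Rightarrow> 'm" where "ww q = fst q (snd q)"

lemma NM: "NN \<subseteq> carrier M" by (rule ker_sub)
lemma Nsub: "is_submod (opp R) M NN" by (rule kernel_submod[OF fEM])

sublocale VV: abelian_group VV by (rule submod_ag[OF Nsub])

lemma PP_iff: "g \<in> PP \<longleftrightarrow> g \<in> EM \<and> (\<forall>x\<in>carrier M. g x \<in> NN)"
  by (rule mhom_submod_iff[OF NM])

lemma NN_zero: "\<zero> \<in> NN"
  using Nsub unfolding is_submod_def by blast

lemma NN_add: "x \<in> NN \<Longrightarrow> y \<in> NN \<Longrightarrow> x \<oplus> y \<in> NN"
  using Nsub unfolding is_submod_def by blast

lemma wwN: "q \<in> QQ \<Longrightarrow> ww q \<in> NN"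
  by (auto simp: ww_def PP_iff)

lemma termc: "q \<in> QQ \<Longrightarrow> [(n::int)] \<cdot>\<^bsub>VV\<^esub> ww q \<in> NN"
  using VV.add.int_pow_closed[of "ww q" n] wwN by simp

lemma pow0: "[(0::int)] \<cdot>\<^bsub>VV\<^esub> x = \<zero>" by (simp add: add_pow_def)

lemma ev_on:
  assumes c: "c \<in> free_on QQ" and F: "finite F" "{q. c q \<noteq> 0} \<subseteq> F" "F \<subseteq> QQ"
  shows "ev c = finsum VV (\<lambda>q. [c q] \<cdot>\<^bsub>VV\<^esub> ww q) F"
  unfolding tens_eval_def ww_def[symmetric]
  apply (rule VV.add.finprod_mono_neutral_cong_left)
  using F termc by (auto simp: pow0 Pi_def)

end

context RMf
begin

lemma free_fin: "c \<in> free_on QQ \<Longrightarrow> finite {q. c q \<noteq> 0}" by (simp add: free_on_def)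
lemma free_sub: "c \<in> free_on QQ \<Longrightarrow> {q. c q \<noteq> 0} \<subseteq> QQ" by (simp add: free_on_def)

lemma ev_closed: assumes c: "c \<in> free_on QQ" shows "ev c \<in> NN"
proof -
  have "(\<lambda>q. [c q] \<cdot>\<^bsub>VV\<^esub> ww q) \<in> {q. c q \<noteq> 0} \<rightarrow> carrier VV"
    using free_sub[OF c] termc by (auto simp: Pi_def)
  from VV.finsum_closed[OF this] show ?thesis unfolding tens_eval_def ww_def[symmetric] by simp
qed

lemma ev_add:
  assumes a: "a \<in> free_on QQ" and b: "b \<in> free_on QQ"
  shows "ev (a + b) = ev a \<oplus> ev b"
proof -
  define F where "F = {q. a q \<noteq> 0} \<union> {q. b q \<noteq> 0}"
  have F: "finite F" "F \<subseteq> QQ" using a b free_fin free_sub by (auto simp: F_def)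
  have "ev (a + b) = finsum VV (\<lambda>q. [(a + b) q] \<cdot>\<^bsub>VV\<^esub> ww q) F"
    by (rule ev_on[OF free_on_add[OF a b] F(1) _ F(2)]) (auto simp: F_def)
  also have "\<dots> = finsum VV (\<lambda>q. [a q] \<cdot>\<^bsub>VV\<^esub> ww q \<oplus>\<^bsub>VV\<^esub> [b q] \<cdot>\<^bsub>VV\<^esub> ww q) F"
  proof (rule VV.finsum_cong')
    fix i assume "i \<in> F"
    then have "ww i \<in> NN" using F wwN by auto
    then show "[(a + b) i] \<cdot>\<^bsub>VV\<^esub> ww i = [a i] \<cdot>\<^bsub>VV\<^esub> ww i \<oplus>\<^bsub>VV\<^esub> [b i] \<cdot>\<^bsub>VV\<^esub> ww i"
      using VV.add.int_pow_mult[of "ww i" "a i" "b i"] by simp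
  next
    show "(\<lambda>q. [a q] \<cdot>\<^bsub>VV\<^esub> ww q \<oplus>\<^bsub>VV\<^esub> [b q] \<cdot>\<^bsub>VV\<^esub> ww q) \<in> F \<rightarrow> carrier VV"
      using F termc NN_add by (auto simp: Pi_def)
  qed simp
  also have "\<dots> = finsum VV (\<lambda>q. [a q] \<cdot>\<^bsub>VV\<^esub> ww q) F \<oplus>\<^bsub>VV\<^esub> finsum VV (\<lambda>q. [b q] \<cdot>\<^bsub>VV\<^esub> ww q) F"
    by (rule VV.finsum_addf) (use F termc in \<open>auto simp: Pi_def\<close>)
  also have "finsum VV (\<lambda>q. [a q] \<cdot>\<^bsub>VV\<^esub> ww q) F = ev a"
    by (rule ev_on[OF a F(1) _ F(2), symmetric]) (auto simp: F_def)
  also have "finsum VV (\<lambda>q. [b q] \<cdot>\<^bsub>VV\<^esub> ww q) F = ev b"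
    by (rule ev_on[OF b F(1) _ F(2), symmetric]) (auto simp: F_def)
  finally show ?thesis by (simp only: plus_fun_def submod_simps)
qed

lemma ev_single:
  assumes c: "c \<in> free_on QQ" and q: "q \<in> QQ" and sc: "{r. c r \<noteq> 0} \<subseteq> {q}"
  shows "ev c = [c q] \<cdot>\<^bsub>VV\<^esub> ww q"
proof -
  have "ev c = finsum VV (\<lambda>q. [c q] \<cdot>\<^bsub>VV\<^esub> ww q) {q}"
    by (rule ev_on[OF c _ sc]) (use q in auto)
  also have "\<dots> = [c q] \<cdot>\<^bsub>VV\<^esub> ww q"
    using termc[OF q, of "c q"] VV.r_zero[of "[c q] \<cdot>\<^bsub>VV\<^esub> ww q"] by (simp add: VV.finsum_insert)
  finally show ?thesis .
qed

lemma ev_delta: "q \<in> QQ \<Longrightarrow> ev (delta q) = ww q"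
  using ev_single[OF free_on_delta, of q q] VV.add.int_pow_1[of "ww q"] wwN
  by (auto simp: delta_def)

lemma ev_zero: "ev 0 = \<zero>"
  by (simp add: tens_eval_def)

lemma ev_diff:
  assumes a: "a \<in> free_on QQ" and b: "b \<in> free_on QQ"
  shows "ev (a - b) = ev a \<ominus>\<^bsub>VV\<^esub> ev b"
proof -
  have "ev a = ev (a - b) \<oplus>\<^bsub>VV\<^esub> ev b" using ev_add[OF free_on_diff[OF a b] b] by simp
  then show ?thesis using VV.ag_add_minus[of "ev (a - b)" "ev b"] ev_closed[OF free_on_diff[OF a b]] ev_closed[OF b]
    by simp
qed

lemma gen_free_zero: "r \<in> GG \<Longrightarrow> r \<in> free_on QQ \<and> ev r = \<zero>"
proof -
  assume r: "r \<in> GG"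
  have addP: "(\<lambda>y\<in>carrier M. g y \<oplus> g' y) \<in> PP" if "g \<in> PP" "g' \<in> PP" for g g'
    using that Nsub hom_add[of g g'] unfolding PP_iff is_submod_def by auto
  have compP: "(\<lambda>y\<in>carrier M. g (s y)) \<in> PP" if "g \<in> PP" "s \<in> EM" for g s
    using that hom_comp[of g s] hcb[OF that(2)] unfolding PP_iff by auto
  have gN: "g y \<in> NN" if "g \<in> PP" "y \<in> carrier M" for g y using that PP_iff by auto
  have NMc: "y \<in> carrier M" if "y \<in> NN" for y using that NM by auto
  show ?thesis
  using r unfolding tens_rel_def
  proof (elim UnE CollectE exE conjE)
    fix g g' m assume rr: "r = delta (\<lambda>y\<in>carrier M. g y \<oplus>\<^bsub>VV\<^esub> g' y, m) - delta (g, m) - delta (g', m)"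
      and g: "g \<in> PP" and g': "g' \<in> PP" and m: "m \<in> carrier M"
    have q1: "(\<lambda>y\<in>carrier M. g y \<oplus> g' y, m) \<in> QQ" using addP[OF g g'] m by simp
    have q2: "(g, m) \<in> QQ" "(g', m) \<in> QQ" using g g' m by auto
    have fr: "r \<in> free_on QQ" unfolding rr using q1 q2 by (simp add: free_on_diff free_on_delta)
    have "ev r = ((g m \<oplus> g' m) \<ominus>\<^bsub>VV\<^esub> g m) \<ominus>\<^bsub>VV\<^esub> g' m"
      unfolding rr using q1 q2 m
      by (simp add: ev_diff free_on_diff free_on_delta ev_delta ww_def)
    also have "\<dots> = \<zero>" using gN[OF g m] gN[OF g' m]
        VV.ag_add_minus2[of "g m" "g' m"] VV.ag_minus_self[of "g' m"] by simp
    finally show ?thesis using fr by simp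
  next
    fix g m m' assume rr: "r = delta (g, m \<oplus> m') - delta (g, m) - delta (g, m')"
      and g: "g \<in> PP" and m: "m \<in> carrier M" and m': "m' \<in> carrier M"
    have q: "(g, m \<oplus> m') \<in> QQ" "(g, m) \<in> QQ" "(g, m') \<in> QQ" using g m m' by auto
    have fr: "r \<in> free_on QQ" unfolding rr using q by (simp add: free_on_diff free_on_delta)
    have gadd: "g (m \<oplus> m') = g m \<oplus> g m'" using mhomD(3)[OF g m m'] by simp
    have "ev r = (g (m \<oplus> m') \<ominus>\<^bsub>VV\<^esub> g m) \<ominus>\<^bsub>VV\<^esub> g m'"
      unfolding rr using q by (simp add: ev_diff free_on_diff free_on_delta ev_delta ww_def)
    also have "\<dots> = \<zero>" using gN[OF g m] gN[OF g m'] gadd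
        VV.ag_add_minus2[of "g m" "g m'"] VV.ag_minus_self[of "g m'"] by simp
    finally show ?thesis using fr by simp
  next
    fix g s m assume rr: "r = delta (\<lambda>y\<in>carrier M. g (s y), m) - delta (g, s m)"
      and g: "g \<in> PP" and s: "s \<in> carrier (End_ring (opp R) M)" and m: "m \<in> carrier M"
    have sE: "s \<in> EM" using s by simp
    have q: "(\<lambda>y\<in>carrier M. g (s y), m) \<in> QQ" "(g, s m) \<in> QQ" using compP[OF g sE] g m hcb[OF sE] by auto
    have fr: "r \<in> free_on QQ" unfolding rr using q by (simp add: free_on_diff free_on_delta)
    have "ev r = g (s m) \<ominus>\<^bsub>VV\<^esub> g (s m)"
      unfolding rr using q m by (simp add: ev_diff free_on_diff free_on_delta ev_delta ww_def)
    also have "\<dots> = \<zero>" using gN[OF g] hcb[OF sE] m VV.ag_minus_self[of "g (s m)"] by simp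
    finally show ?thesis using fr by simp
  qed
qed

lemma zspan_free_zero: "c \<in> ZZ \<Longrightarrow> c \<in> free_on QQ \<and> ev c = \<zero>"
proof (induction rule: zspan.induct)
  case zspan_zero
  show ?case using free_on_zero[of QQ] ev_zero unfolding zero_fun_def by (rule conjI)
next
  case (zspan_gen g)
  then show ?case by (rule gen_free_zero)
next
  case (zspan_diff a b)
  have "a - b \<in> free_on QQ \<and> ev (a - b) = \<zero>"
    using zspan_diff.IH free_on_diff[of a QQ b] ev_diff[of a b] VV.ag_minus_self[of "\<zero>"] NN_zero by simp
  then show ?case unfolding fun_diff_def .
qed

lemma VV_ainv: "y \<in> NN \<Longrightarrow> \<ominus>\<^bsub>VV\<^esub> y = \<ominus> y"
  by (rule VV.minus_equality) (use Nsub NM in \<open>auto simp: is_submod_def l_neg\<close>)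

context
  fixes p assumes pP: "p \<in> PP" and pid: "\<forall>x\<in>NN. p x = x"
begin

lemma pE: "p \<in> EM" using pP PP_iff by simp

lemma rel2: "x \<in> carrier M \<Longrightarrow> y \<in> carrier M \<Longrightarrow> delta (p, x \<oplus> y) - delta (p, x) - delta (p, y) \<in> ZZ"
  by (rule zspan_gen) (unfold tens_rel_def, use pP in blast)

lemma C2: "delta (p, \<zero>) \<in> ZZ"
proof -
  have "delta (p, \<zero> \<oplus> \<zero>) - delta (p, \<zero>) - delta (p, \<zero>) \<in> ZZ" by (rule rel2) simp_all
  then have "- delta (p, \<zero>) \<in> ZZ" by simp
  then show ?thesis using zspan_neg by fastforce
qed

lemma C3: assumes g: "g \<in> PP" and m: "m \<in> carrier M" shows "delta (g, m) - delta (p, g m) \<in> ZZ"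
proof -
  have gE: "g \<in> EM" using g PP_iff by simp
  have "delta (\<lambda>y\<in>carrier M. p (g y), m) - delta (p, g m) \<in>
     {delta (\<lambda>y\<in>carrier M. g' (s y), m') - delta (g', s m') | g' s m'.
        g' \<in> PP \<and> s \<in> carrier (End_ring (opp R) M) \<and> m' \<in> carrier M}"
    by (rule CollectI, rule exI[of _ p], rule exI[of _ g], rule exI[of _ m]) (use pP gE m in simp)
  then have "delta (\<lambda>y\<in>carrier M. p (g y), m) - delta (p, g m) \<in> ZZ"
    by (intro zspan_gen) (unfold tens_rel_def, rule UnI2)
  moreover have "(\<lambda>y\<in>carrier M. p (g y)) = g"
  proof
    fix y show "(\<lambda>y\<in>carrier M. p (g y)) y = g y"
      using pid g PP_iff mhomD(2)[OF gE, of y] by (cases "y \<in> carrier M") auto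
  qed
  ultimately show ?thesis by simp
qed

lemma C4: assumes x: "x \<in> NN" shows "(\<lambda>r. n * delta (p, x) r) - delta (p, [n] \<cdot>\<^bsub>VV\<^esub> x) \<in> ZZ"
proof (induction n rule: int_induct[where k=0])
  case base
  have eq: "(\<lambda>r. 0 * delta (p, x) r) - delta (p, [(0::int)] \<cdot>\<^bsub>VV\<^esub> x) = - delta (p, \<zero>)"
    by (simp add: pow0 fun_eq_iff)
  show ?case unfolding eq by (rule zspan_neg[OF C2])
next
  case (step1 i)
  define y where "y = [i] \<cdot>\<^bsub>VV\<^esub> x"
  have yN: "y \<in> NN" using VV.add.int_pow_closed x by (simp add: y_def)
  have eq: "[(i + 1)] \<cdot>\<^bsub>VV\<^esub> x = y \<oplus> x"
    using VV.add.int_pow_mult[of x i 1] VV.add.int_pow_1[of x] x by (simp add: y_def)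
  have r: "delta (p, y \<oplus> x) - delta (p, y) - delta (p, x) \<in> ZZ" using yN x NM by (intro rel2) auto
  have eq2: "(\<lambda>r. (i + 1) * delta (p, x) r) - delta (p, [(i + 1)] \<cdot>\<^bsub>VV\<^esub> x) =
     ((\<lambda>r. i * delta (p, x) r) - delta (p, y)) - (delta (p, y \<oplus> x) - delta (p, y) - delta (p, x))"
    unfolding eq by (simp add: fun_eq_iff algebra_simps)
  show ?case unfolding eq2 by (rule zspan_diff[OF step1(2)[folded y_def] r])
next
  case (step2 i)
  define y where "y = [(i - 1)] \<cdot>\<^bsub>VV\<^esub> x"
  have yN: "y \<in> NN" using VV.add.int_pow_closed x by (simp add: y_def)
  have eq: "[i] \<cdot>\<^bsub>VV\<^esub> x = y \<oplus> x"
    using VV.add.int_pow_mult[of x "i - 1" 1] VV.add.int_pow_1[of x] x by (simp add: y_def)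
  have r: "delta (p, y \<oplus> x) - delta (p, y) - delta (p, x) \<in> ZZ" using yN x NM by (intro rel2) auto
  have eq2: "(\<lambda>r. (i - 1) * delta (p, x) r) - delta (p, y) =
     ((\<lambda>r. i * delta (p, x) r) - delta (p, [i] \<cdot>\<^bsub>VV\<^esub> x)) + (delta (p, y \<oplus> x) - delta (p, y) - delta (p, x))"
    unfolding eq by (simp add: fun_eq_iff algebra_simps)
  show ?case unfolding y_def[symmetric] eq2 by (rule zspan_add[OF step2(2) r])
qed

lemma cong_main:
  assumes "finite F"
  shows "c \<in> free_on QQ \<Longrightarrow> {q. c q \<noteq> 0} \<subseteq> F \<Longrightarrow> c - delta (p, ev c) \<in> ZZ"
  using assms
proof (induction F arbitrary: c rule: finite_induct)
  case empty
  then have c0: "c = 0" by (auto simp: fun_eq_iff)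
  have "c - delta (p, ev c) = - delta (p, \<zero>)" unfolding c0 ev_zero by simp
  then show ?case using zspan_neg[OF C2] by metis
next
  case (insert q F)
  define c' where "c' = c(q := 0)"
  have c'f: "c' \<in> free_on QQ" using free_on_upd[OF insert.prems(1)] by (simp add: c'_def)
  have c's: "{r. c' r \<noteq> 0} \<subseteq> F" using insert.prems(2) by (auto simp: c'_def)
  have IH: "c' - delta (p, ev c') \<in> ZZ" by (rule insert.IH[OF c'f c's])
  show ?case
  proof (cases "c q = 0")
    case True
    then have "c' = c" by (auto simp: c'_def)
    then show ?thesis using IH by (simp only:)
  next
    case False
    then have qQ: "q \<in> QQ" using free_sub[OF insert.prems(1)] by auto
    obtain g m where qgm: "q = (g, m)" by (cases q)
    have g: "g \<in> PP" and m: "m \<in> carrier M" using qQ qgm by auto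
    define n where "n = c q"
    have dfree: "c - c' \<in> free_on QQ" by (rule free_on_diff[OF insert.prems(1) c'f])
    have dsupp: "{r. (c - c') r \<noteq> 0} \<subseteq> {q}" by (auto simp: c'_def)
    have evd0: "ev (c - c') = [(c - c') q] \<cdot>\<^bsub>VV\<^esub> ww q" by (rule ev_single[OF dfree qQ dsupp])
    have "(c - c') q = n" by (simp add: c'_def n_def)
    then have evd: "ev (c - c') = [n] \<cdot>\<^bsub>VV\<^esub> ww q" using evd0 by (simp only:)
    have cc: "c = c' + (c - c')" by simp
    have evc: "ev c = ev c' \<oplus> [n] \<cdot>\<^bsub>VV\<^esub> ww q"
      using ev_add[OF c'f dfree] evd cc by metis
    have wq: "ww q = g m" by (simp add: qgm ww_def)
    have x1: "ev c' \<in> NN" by (rule ev_closed[OF c'f])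
    have x2: "[n] \<cdot>\<^bsub>VV\<^esub> ww q \<in> NN" by (rule termc[OF qQ])
    have dd: "c - c' = (\<lambda>r. n * delta (g, m) r)"
      by (rule ext) (auto simp: c'_def n_def delta_def qgm)
    have D1: "(\<lambda>r. n * delta (g, m) r) - (\<lambda>r. n * delta (p, g m) r) \<in> ZZ"
    proof -
      have "(\<lambda>r. n * (delta (g, m) - delta (p, g m)) r) \<in> ZZ" by (rule zspan_scale[OF C3[OF g m]])
      then show ?thesis by (simp add: fun_eq_iff right_diff_distrib fun_diff_def)
    qed
    have D2: "(\<lambda>r. n * delta (p, g m) r) - delta (p, [n] \<cdot>\<^bsub>VV\<^esub> g m) \<in> ZZ"
      by (rule C4) (use wwN[OF qQ] wq in simp)
    have D: "(c - c') - delta (p, [n] \<cdot>\<^bsub>VV\<^esub> ww q) \<in> ZZ"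
      using zspan_add[OF D1 D2] unfolding dd wq by (simp add: algebra_simps)
    have E: "delta (p, ev c' \<oplus> [n] \<cdot>\<^bsub>VV\<^esub> ww q) - delta (p, ev c') - delta (p, [n] \<cdot>\<^bsub>VV\<^esub> ww q) \<in> ZZ"
      by (rule rel2) (use x1 x2 NM in auto)
    have eq3: "c - delta (p, ev c) = (c' - delta (p, ev c')) + ((c - c') - delta (p, [n] \<cdot>\<^bsub>VV\<^esub> ww q))
       - (delta (p, ev c' \<oplus> [n] \<cdot>\<^bsub>VV\<^esub> ww q) - delta (p, ev c') - delta (p, [n] \<cdot>\<^bsub>VV\<^esub> ww q))"
      unfolding evc by (simp add: algebra_simps)
    show ?thesis unfolding eq3 by (rule zspan_diff[OF zspan_add[OF IH D] E])
  qed
qed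

lemma Stat_of_proj: "in_Stat R M VV"
  unfolding in_Stat_def
proof
  show "ev ` free_on QQ = carrier VV"
  proof
    show "ev ` free_on QQ \<subseteq> carrier VV" using ev_closed by auto
    show "carrier VV \<subseteq> ev ` free_on QQ"
    proof
      fix x assume "x \<in> carrier VV"
      then have x: "x \<in> NN" by simp
      then have q: "(p, x) \<in> QQ" using pP NM by auto
      have "ev (delta (p, x)) = x" using ev_delta[OF q] pid x by (simp add: ww_def)
      then show "x \<in> ev ` free_on QQ" using free_on_delta[OF q] by (metis image_eqI)
    qed
  qed
  show "{c \<in> free_on QQ. ev c = \<zero>\<^bsub>VV\<^esub>} = ZZ"
  proof
    show "ZZ \<subseteq> {c \<in> free_on QQ. ev c = \<zero>\<^bsub>VV\<^esub>}" using zspan_free_zero by auto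
    show "{c \<in> free_on QQ. ev c = \<zero>\<^bsub>VV\<^esub>} \<subseteq> ZZ"
    proof
      fix c assume "c \<in> {c \<in> free_on QQ. ev c = \<zero>\<^bsub>VV\<^esub>}"
      then have c: "c \<in> free_on QQ" "ev c = \<zero>" by auto
      have "c - delta (p, ev c) \<in> ZZ" by (rule cong_main[OF free_fin[OF c(1)] c(1)]) simp
      then have "c - delta (p, \<zero>) \<in> ZZ" using c(2) by simp
      from zspan_add[OF this C2] show "c \<in> ZZ" by simp
    qed
  qed
qed

end

end


context RM
begin

lemma RMf_inst: "f \<in> EM \<Longrightarrow> RMf R M f"
  by (intro RMf.intro RMf_axioms.intro RM_axioms) simp

lemma part1_iii:
  "strongly_self_rickart (opp R) M \<longleftrightarrow>
       strongly_self_rickart (opp S) (ring_rmod S) \<and>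
       (\<forall>f\<in>carrier S. in_Stat R M (submod M (mker M M f)))"
proof
  assume ssr: "strongly_self_rickart (opp R) M"
  show "strongly_self_rickart (opp S) (ring_rmod S) \<and> (\<forall>f\<in>carrier S. in_Stat R M (submod M (mker M M f)))"
  proof (intro conjI ballI)
    show "strongly_self_rickart (opp S) (ring_rmod S)" using A1[OF ssr] .
    fix f assume f: "f \<in> carrier S"
    interpret F: RMf R M f using RMf_inst f by simp
    obtain p where p: "p \<in> EM" "\<forall>x\<in>carrier M. p x \<in> mker M M f" "\<forall>x\<in>mker M M f. p x = x"
      using ker_proj[OF ssr, of f] f by auto
    have pP: "p \<in> mhom (opp R) M (submod M (mker M M f))" using p F.PP_iff by simp
    show "in_Stat R M (submod M (mker M M f))" by (rule F.Stat_of_proj[OF pP p(3)])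
  qed
next
  assume H: "strongly_self_rickart (opp S) (ring_rmod S) \<and> (\<forall>f\<in>carrier S. in_Stat R M (submod M (mker M M f)))"
  show "strongly_self_rickart (opp R) M"
    unfolding strongly_self_rickart_def
  proof
    fix f assume f: "f \<in> EM"
    interpret F: RMf R M f using RMf_inst f by simp
    obtain e where e: "e \<in> EM" "\<forall>x\<in>carrier M. e (e x) = e x" "\<forall>x\<in>carrier M. f (e x) = \<zero>"
      "\<forall>h\<in>EM. \<forall>x\<in>carrier M. e (h x) = h (e x)"
      "\<forall>g\<in>EM. (\<forall>x\<in>carrier M. f (g x) = \<zero>) \<longrightarrow> (\<forall>x\<in>carrier M. e (g x) = g x)"
      using B1[OF conjunct1[OF H] f] by blast
    have surj: "tens_eval (submod M (mker M M f)) ` free_on (mhom (opp R) M (submod M (mker M M f)) \<times> carrier M)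
        = mker M M f"
      using H f unfolding in_Stat_def by auto
    define T where "T = {y \<in> mker M M f. e y = y}"
    have T1: "T \<subseteq> carrier (submod M (mker M M f))" by (auto simp: T_def)
    have T2: "\<zero>\<^bsub>submod M (mker M M f)\<^esub> \<in> T" using F.NN_zero hZ[OF e(1)] by (simp add: T_def)
    have T3: "x \<oplus>\<^bsub>submod M (mker M M f)\<^esub> y \<in> T" if "x \<in> T" "y \<in> T" for x y
      using that F.NN_add mhomD(3)[OF e(1), of x y] ker_sub by (auto simp: T_def)
    have T4: "\<ominus>\<^bsub>submod M (mker M M f)\<^esub> x \<in> T" if x: "x \<in> T" for x
    proof -
      have xN: "x \<in> mker M M f" "e x = x" using x by (auto simp: T_def)
      have "\<ominus>\<^bsub>submod M (mker M M f)\<^esub> x \<in> mker M M f" using F.VV.a_inv_closed[of x] xN by simp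
      moreover have "\<ominus>\<^bsub>submod M (mker M M f)\<^esub> x = \<ominus> x" by (rule F.VV_ainv[OF xN(1)])
      moreover have "e (\<ominus> x) = \<ominus> x" using hN[OF e(1), of x] xN ker_sub by auto
      ultimately show ?thesis by (simp add: T_def)
    qed
    have wT: "F.ww q \<in> T" if q: "q \<in> mhom (opp R) M (submod M (mker M M f)) \<times> carrier M" for q
    proof -
      obtain g m where qgm: "q = (g, m)" by (cases q)
      have g: "g \<in> EM" "\<forall>x\<in>carrier M. g x \<in> mker M M f" and m: "m \<in> carrier M"
        using q qgm F.PP_iff by auto
      have "\<forall>x\<in>carrier M. f (g x) = \<zero>" using g(2) by (auto simp: mker_def)
      then have "e (g m) = g m" using e(5) g(1) m by blast
      then show ?thesis using g m by (simp add: T_def qgm F.ww_def)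
    qed
    have evT: "tens_eval (submod M (mker M M f)) c \<in> T"
      if c: "c \<in> free_on (mhom (opp R) M (submod M (mker M M f)) \<times> carrier M)" for c
      unfolding tens_eval_def F.ww_def[symmetric]
    proof (rule F.VV.sub_finsum[OF T1 T2 T3])
      show "finite {p. c p \<noteq> 0}" using c by (simp add: free_on_def)
      fix q assume "q \<in> {p. c p \<noteq> 0}"
      then have q: "q \<in> mhom (opp R) M (submod M (mker M M f)) \<times> carrier M" using c by (auto simp: free_on_def)
      show "[c q] \<cdot>\<^bsub>submod M (mker M M f)\<^esub> F.ww q \<in> T"
        by (rule F.VV.sub_int_pow[OF T1 T2 T3 T4 wT[OF q]])
    qed
    have "\<forall>x\<in>mker M M f. e x = x"
    proof
      fix x assume "x \<in> mker M M f"
      then have "x \<in> tens_eval (submod M (mker M M f)) ` free_on (mhom (opp R) M (submod M (mker M M f)) \<times> carrier M)"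
        using surj by simp
      then obtain c where c: "c \<in> free_on (mhom (opp R) M (submod M (mker M M f)) \<times> carrier M)"
        and xc: "x = tens_eval (submod M (mker M M f)) c" by (rule imageE)
      have "x \<in> T" unfolding xc by (rule evT[OF c])
      then show "e x = x" by (simp add: T_def)
    qed
    then show "dsummand (opp R) M (mker M M f) \<and> fully_invariant (opp R) M (mker M M f)"
      using B2[OF e(1-4)] by blast
  qed
qed

end


definition phiC :: "('r, 'm) module \<Rightarrow> ('m \<Rightarrow> 'm) \<Rightarrow> ('m \<Rightarrow> 'm) \<Rightarrow> 'm set \<Rightarrow> 'm" where
  "phiC M f e = (\<lambda>A\<in>carrier (Coker M f). e (SOME a. a \<in> A))"

context RMf
begin

abbreviation "phi \<equiv> phiC M f"

abbreviation "II \<equiv> f ` carrier M"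
abbreviation "CK \<equiv> Coker M f"
abbreviation "cs \<equiv> mcoset M II"

lemma fc: "x \<in> carrier M \<Longrightarrow> f x \<in> carrier M" by (rule hc[OF fEM])

lemma II_sub: "II \<subseteq> carrier M" using fc by auto

lemma II_zero: "\<zero> \<in> II"
  using hZ[OF fEM] by (metis image_eqI zero_closed)

lemma II_add: "x \<in> II \<Longrightarrow> y \<in> II \<Longrightarrow> x \<oplus> y \<in> II"
proof -
  assume "x \<in> II" "y \<in> II"
  then obtain u v where "u \<in> carrier M" "v \<in> carrier M" "x = f u" "y = f v" by auto
  then show ?thesis using mhomD(3)[OF fEM, of u v] by (metis a_closed image_eqI)
qed

lemma II_neg: "x \<in> II \<Longrightarrow> \<ominus> x \<in> II"
proof -
  assume "x \<in> II"
  then obtain u where "u \<in> carrier M" "x = f u" by auto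
  then show ?thesis using hN[OF fEM, of u] by (metis a_inv_closed image_eqI)
qed

lemma II_minus: "x \<in> II \<Longrightarrow> y \<in> II \<Longrightarrow> x \<ominus> y \<in> II"
  by (simp add: a_minus_def II_add II_neg)

lemma II_smult: "r \<in> carrier R \<Longrightarrow> x \<in> II \<Longrightarrow> smult M r x \<in> II"
proof -
  assume r: "r \<in> carrier R" and "x \<in> II"
  then obtain u where "u \<in> carrier M" "x = f u" by auto
  then show ?thesis using mhomD(4)[OF fEM, of r u] r
    by (metis image_eqI opp_carrier smult_closed)
qed

lemma cs_def': "cs a = (\<lambda>n. a \<oplus> n) ` II" by (simp add: mcoset_def)

lemma cs_mem: assumes a: "a \<in> carrier M" shows "b \<in> cs a \<longleftrightarrow> b \<in> carrier M \<and> b \<ominus> a \<in> II"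
proof
  assume "b \<in> cs a"
  then obtain n where n: "n \<in> II" "b = a \<oplus> n" by (auto simp: cs_def')
  have nM: "n \<in> carrier M" using n II_sub by auto
  have "b \<ominus> a = n" using n(2) ag_add_minus2[OF a nM] by simp
  then show "b \<in> carrier M \<and> b \<ominus> a \<in> II" using n a nM by simp
next
  assume b: "b \<in> carrier M \<and> b \<ominus> a \<in> II"
  have "b = a \<oplus> (b \<ominus> a)" using a b ag_minus_add[of b a] by (simp add: a_comm)
  then show "b \<in> cs a" using b by (auto simp: cs_def')
qed

lemma cs_self: "a \<in> carrier M \<Longrightarrow> a \<in> cs a"
  using cs_mem[of a a] ag_minus_self[of a] II_zero by simp

lemma cs_sub: "a \<in> carrier M \<Longrightarrow> cs a \<subseteq> carrier M"
  using cs_mem by auto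

lemma minus_trans: "x \<in> carrier M \<Longrightarrow> a \<in> carrier M \<Longrightarrow> b \<in> carrier M \<Longrightarrow> (x \<ominus> a) \<oplus> (a \<ominus> b) = x \<ominus> b"
  by (metis a_assoc a_minus_def a_inv_closed ag_minus_add minus_closed)

lemma cs_eq: assumes a: "a \<in> carrier M" and b: "b \<in> carrier M"
  shows "cs a = cs b \<longleftrightarrow> a \<ominus> b \<in> II"
proof
  assume "cs a = cs b"
  then have "a \<in> cs b" using cs_self[OF a] by simp
  then show "a \<ominus> b \<in> II" using cs_mem[OF b] by simp
next
  assume ab: "a \<ominus> b \<in> II"
  have ba: "b \<ominus> a \<in> II" using II_neg[OF ab] ag_minus_distrib[OF a b] by simp
  show "cs a = cs b"
  proof
    show "cs a \<subseteq> cs b"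
    proof
      fix x assume "x \<in> cs a"
      then have x: "x \<in> carrier M" "x \<ominus> a \<in> II" using cs_mem[OF a] by auto
      then have "x \<ominus> b \<in> II" using II_add[OF x(2) ab] minus_trans[OF x(1) a b] by simp
      then show "x \<in> cs b" using cs_mem[OF b] x by simp
    qed
    show "cs b \<subseteq> cs a"
    proof
      fix x assume "x \<in> cs b"
      then have x: "x \<in> carrier M" "x \<ominus> b \<in> II" using cs_mem[OF b] by auto
      then have "x \<ominus> a \<in> II" using II_add[OF x(2) ba] minus_trans[OF x(1) b a] by simp
      then show "x \<in> cs a" using cs_mem[OF a] x by simp
    qed
  qed
qed

lemma cs0: "cs \<zero> = II"
  using II_sub by (auto simp: cs_def' image_iff subset_iff)

lemma cs_zero_iff: "a \<in> carrier M \<Longrightarrow> cs a = II \<longleftrightarrow> a \<in> II"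
  using cs_eq[of a \<zero>] cs0 by (simp add: ag_minus_zero)

lemma CK_carrier: "carrier CK = cs ` carrier M"
  by (simp add: Coker_def quot_mod_def)

lemma CK_zero: "zero CK = II"
  by (simp add: Coker_def quot_mod_def)

lemma CK_add: assumes a: "a \<in> carrier M" and b: "b \<in> carrier M"
  shows "add CK (cs a) (cs b) = cs (a \<oplus> b)"
proof -
  have eq: "cs (a' \<oplus> b') = cs (a \<oplus> b)" if a': "a' \<in> cs a" and b': "b' \<in> cs b" for a' b'
  proof -
    have a'': "a' \<in> carrier M" "a' \<ominus> a \<in> II" using cs_mem[OF a] a' by auto
    have b'': "b' \<in> carrier M" "b' \<ominus> b \<in> II" using cs_mem[OF b] b' by auto
    have "(a' \<oplus> b') \<ominus> (a \<oplus> b) = (a' \<ominus> a) \<oplus> (b' \<ominus> b)"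
      by (rule ag_add_minus_distrib) (use a b a'' b'' in auto)
    then have "(a' \<oplus> b') \<ominus> (a \<oplus> b) \<in> II" using II_add a'' b'' by simp
    then show ?thesis using cs_eq a b a'' b'' by simp
  qed
  have "add CK (cs a) (cs b) = (\<Union>a'\<in>cs a. \<Union>b'\<in>cs b. cs (a' \<oplus> b'))"
    by (simp add: Coker_def quot_mod_def)
  also have "\<dots> = cs (a \<oplus> b)"
    using eq cs_self[OF a] cs_self[OF b] by blast
  finally show ?thesis .
qed

lemma CK_smult: assumes r: "r \<in> carrier R" and a: "a \<in> carrier M"
  shows "smult CK r (cs a) = cs (smult M r a)"
proof -
  have rr: "r \<in> carrier (opp R)" using r by simp
  have eq: "cs (smult M r a') = cs (smult M r a)" if a': "a' \<in> cs a" for a'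
  proof -
    have a'': "a' \<in> carrier M" "a' \<ominus> a \<in> II" using cs_mem[OF a] a' by auto
    have "smult M r a' \<ominus> smult M r a = smult M r (a' \<ominus> a)"
      using smult_minus[OF rr a''(1) a] by simp
    then have "smult M r a' \<ominus> smult M r a \<in> II" using II_smult[OF r a''(2)] by simp
    then show ?thesis using cs_eq smult_closed[OF rr a] smult_closed[OF rr a''(1)] by simp
  qed
  have "smult CK r (cs a) = (\<Union>a'\<in>cs a. cs (smult M r a'))"
    by (simp add: Coker_def quot_mod_def)
  also have "\<dots> = cs (smult M r a)"
    using eq cs_self[OF a] by blast
  finally show ?thesis .
qed

lemma coker_apply: "x \<in> carrier M \<Longrightarrow> coker M f x = cs x"
  by (simp add: coker_def quot_proj_def)

lemma cs_in: "a \<in> carrier M \<Longrightarrow> cs a \<in> carrier CK"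
  by (simp add: CK_carrier)

lemma CK_zero_in: "II \<in> carrier CK"
  using cs_in[of \<zero>] cs0 by simp

lemma hom_from_CK:
  assumes h: "h \<in> mhom (opp R) CK M"
  shows "(\<lambda>x\<in>carrier M. h (cs x)) \<in> EM" "h II = \<zero>"
proof -
  have hcl: "\<And>x. x \<in> carrier M \<Longrightarrow> h (cs x) \<in> carrier M" using mhomD(1)[OF h] cs_in by blast
  show "(\<lambda>x\<in>carrier M. h (cs x)) \<in> EM"
  proof (rule mhomI)
    show "\<And>x. x \<in> carrier M \<Longrightarrow> (\<lambda>x\<in>carrier M. h (cs x)) x \<in> carrier M" using hcl by simp
    show "\<And>x. x \<notin> carrier M \<Longrightarrow> (\<lambda>x\<in>carrier M. h (cs x)) x = undefined" by simp
  next
    fix x y assume xy: "x \<in> carrier M" "y \<in> carrier M"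
    have "h (cs (x \<oplus> y)) = h (add CK (cs x) (cs y))" using CK_add[OF xy] by simp
    also have "\<dots> = h (cs x) \<oplus> h (cs y)" using mhomD(3)[OF h] cs_in xy by simp
    finally show "(\<lambda>x\<in>carrier M. h (cs x)) (x \<oplus> y) = (\<lambda>x\<in>carrier M. h (cs x)) x \<oplus> (\<lambda>x\<in>carrier M. h (cs x)) y"
      using xy by simp
  next
    fix r x assume r: "r \<in> carrier (opp R)" and x: "x \<in> carrier M"
    have "h (cs (smult M r x)) = h (smult CK r (cs x))" using CK_smult r x by simp
    also have "\<dots> = smult M r (h (cs x))" using mhomD(4)[OF h] cs_in r x by simp
    finally show "(\<lambda>x\<in>carrier M. h (cs x)) (smult M r x) = smult M r ((\<lambda>x\<in>carrier M. h (cs x)) x)"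
      using x r by simp
  qed
  have "add CK (cs \<zero>) (cs \<zero>) = cs \<zero>" using CK_add[of \<zero> \<zero>] by simp
  then have "h II = h II \<oplus> h II" using mhomD(3)[OF h, of II II] CK_zero_in cs0 by simp
  then show "h II = \<zero>" using ag_idem_zero hcl[of \<zero>] cs0 by simp
qed

lemma hom_from_CK_f: "h \<in> mhom (opp R) CK M \<Longrightarrow> y \<in> carrier M \<Longrightarrow> h (cs (f y)) = \<zero>"
  using hom_from_CK(2)[of h] cs_zero_iff[of "f y"] fc[of y] by simp


context
  fixes e assumes eE: "e \<in> EM" and eI: "\<forall>x\<in>II. e x = \<zero>"
begin

lemma phi_cs: assumes a: "a \<in> carrier M" shows "phi e (cs a) = e a"
proof -
  have "(SOME a'. a' \<in> cs a) \<in> cs a" using cs_self[OF a] by (rule someI)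
  then have a': "(SOME a'. a' \<in> cs a) \<in> carrier M" "(SOME a'. a' \<in> cs a) \<ominus> a \<in> II"
    using cs_mem[OF a] by auto
  obtain u where u: "u \<in> carrier M" "(SOME a'. a' \<in> cs a) \<ominus> a = f u" using a'(2) by auto
  have "e ((SOME a'. a' \<in> cs a) \<ominus> a) = \<zero>" unfolding u(2) using eI u(1) by simp
  then have "e (SOME a'. a' \<in> cs a) \<ominus> e a = \<zero>" using hM[OF eE a'(1) a] by simp
  then have "e (SOME a'. a' \<in> cs a) = e a" using ag_eq_minus hc[OF eE a'(1)] hc[OF eE a] by simp
  then show ?thesis using cs_in[OF a] by (simp add: phiC_def)
qed

lemma phi_hom: "phi e \<in> mhom (opp R) CK M"
proof (rule mhomI)
  fix A assume "A \<in> carrier CK"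
  then obtain a where a: "a \<in> carrier M" "A = cs a" using CK_carrier by auto
  then show "phi e A \<in> carrier M" using phi_cs hc[OF eE a(1)] by simp
next
  show "\<And>A. A \<notin> carrier CK \<Longrightarrow> phi e A = undefined" by (simp add: phiC_def)
next
  fix A B assume "A \<in> carrier CK" "B \<in> carrier CK"
  then obtain a b where ab: "a \<in> carrier M" "A = cs a" "b \<in> carrier M" "B = cs b" using CK_carrier by auto
  then show "phi e (A \<oplus>\<^bsub>CK\<^esub> B) = phi e A \<oplus> phi e B"
    using CK_add[of a b] phi_cs mhomD(3)[OF eE, of a b] by simp
next
  fix r A assume r: "r \<in> carrier (opp R)" and "A \<in> carrier CK"
  then obtain a where a: "a \<in> carrier M" "A = cs a" using CK_carrier by auto
  then show "phi e (smult CK r A) = smult M r (phi e A)"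
    using CK_smult[of r a] r phi_cs smult_closed[OF r a(1)] mhomD(4)[OF eE r a(1)] by simp
qed

end

end


context RM
begin

lemma A1':
  assumes dssr: "dual_strongly_self_rickart (opp R) M"
  shows "strongly_self_rickart S (ring_lmod S)"
  unfolding strongly_self_rickart_def
proof (intro ballI conjI)
  fix \<phi> assume \<phi>: "\<phi> \<in> mhom S (ring_lmod S) (ring_lmod S)"
  define t where "t = \<phi> (one S)"
  have t: "t \<in> EM" using \<phi> by (simp add: t_def)
  define J where "J = t ` carrier M"
  have Jd: "dsummand (opp R) M J" "fully_invariant (opp R) M J"
    using dssr t unfolding dual_strongly_self_rickart_def J_def by auto
  obtain p where p: "p \<in> EM" "\<forall>x\<in>carrier M. p x \<in> J" "\<forall>x\<in>J. p x = x"
    using summand_proj[OF Jd(1)] by blast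
  have K: "mker (ring_lmod S) (ring_lmod S) \<phi> = {s \<in> EM. \<forall>x\<in>carrier M. s (t x) = \<zero>}"
  proof -
    have "\<phi> s = zero S \<longleftrightarrow> (\<forall>x\<in>carrier M. s (t x) = \<zero>)" if s: "s \<in> EM" for s
      using lS_endo[OF \<phi>, of s] s t zeroS_iff[OF s t] by (simp add: t_def)
    then show ?thesis by (auto simp: mker_def)
  qed
  define \<psi> where "\<psi> = (\<lambda>s\<in>carrier S. mult S s p)"
  have \<psi>: "\<psi> \<in> mhom S (ring_lmod S) (ring_lmod S)" unfolding \<psi>_def using p(1) by (intro rmult_endo) simp
  have pp: "\<And>x. x \<in> carrier M \<Longrightarrow> p (p x) = p x" using p by auto
  have idem: "\<And>s. s \<in> carrier (ring_lmod S) \<Longrightarrow> \<psi> (\<psi> s) = \<psi> s"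
    unfolding \<psi>_def using p(1) by (auto simp: S_ext_iff pp hcb[OF p(1)])
  have eqK: "mker (ring_lmod S) (ring_lmod S) \<phi> = {s \<in> carrier (ring_lmod S). \<psi> s = \<zero>\<^bsub>ring_lmod S\<^esub>}"
  proof -
    have "(\<forall>x\<in>carrier M. s (t x) = \<zero>) \<longleftrightarrow> (\<forall>x\<in>carrier M. s (p x) = \<zero>)" if s: "s \<in> EM" for s
    proof
      assume H: "\<forall>x\<in>carrier M. s (t x) = \<zero>"
      show "\<forall>x\<in>carrier M. s (p x) = \<zero>"
      proof
        fix x assume x: "x \<in> carrier M"
        then have "p x \<in> J" using p by auto
        then obtain y where "y \<in> carrier M" "p x = t y" by (auto simp: J_def)
        then show "s (p x) = \<zero>" using H by simp
      qed
    next
      assume H: "\<forall>x\<in>carrier M. s (p x) = \<zero>"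
      show "\<forall>x\<in>carrier M. s (t x) = \<zero>"
      proof
        fix x assume x: "x \<in> carrier M"
        then have "t x \<in> J" by (simp add: J_def)
        then have "p (t x) = t x" using p by auto
        then show "s (t x) = \<zero>" using H hc[OF t x] by metis
      qed
    qed
    then show ?thesis unfolding K \<psi>_def using p(1) by (auto simp: zeroS_iff)
  qed
  show "dsummand S (ring_lmod S) (mker (ring_lmod S) (ring_lmod S) \<phi>)"
    unfolding eqK by (rule idem_summand(2)[OF lS_ag lS_sm lS_sm0 \<psi> idem])
  show "fully_invariant S (ring_lmod S) (mker (ring_lmod S) (ring_lmod S) \<phi>)"
    unfolding fully_invariant_def K
  proof (intro ballI subsetI)
    fix h u assume h: "h \<in> mhom S (ring_lmod S) (ring_lmod S)"
      and u: "u \<in> h ` {s \<in> EM. \<forall>x\<in>carrier M. s (t x) = \<zero>}"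
    then obtain s where s: "s \<in> EM" "\<forall>x\<in>carrier M. s (t x) = \<zero>" "u = h s" by auto
    have h1: "h (one S) \<in> EM" using h by simp
    have us: "u = mult S s (h (one S))" using lS_endo[OF h, of s] s by simp
    have "\<forall>x\<in>carrier M. s (h (one S) (t x)) = \<zero>"
    proof
      fix x assume x: "x \<in> carrier M"
      have "h (one S) (t x) \<in> J" using Jd(2) h1 x unfolding fully_invariant_def J_def by blast
      then obtain y where "y \<in> carrier M" "h (one S) (t x) = t y" by (auto simp: J_def)
      then show "s (h (one S) (t x)) = \<zero>" using s by simp
    qed
    then show "u \<in> {s \<in> EM. \<forall>x\<in>carrier M. s (t x) = \<zero>}" using us s h1 hcb[OF t] by simp
  qed
qed

lemma B1':
  assumes ssr: "strongly_self_rickart S (ring_lmod S)" and f: "f \<in> EM"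
  shows "\<exists>e\<in>EM. (\<forall>x\<in>carrier M. e (e x) = e x) \<and> (\<forall>x\<in>carrier M. e (f x) = \<zero>) \<and>
    (\<forall>h\<in>EM. \<forall>x\<in>carrier M. e (h x) = h (e x)) \<and>
    (\<forall>g\<in>EM. (\<forall>x\<in>carrier M. g (f x) = \<zero>) \<longrightarrow> (\<forall>x\<in>carrier M. g (e x) = g x))"
proof -
  interpret W: abelian_group "ring_lmod S" by (rule lS_ag)
  define \<phi> where "\<phi> = (\<lambda>t\<in>carrier S. mult S t f)"
  have \<phi>: "\<phi> \<in> mhom S (ring_lmod S) (ring_lmod S)" unfolding \<phi>_def using f by (intro rmult_endo) simp
  define K where "K = mker (ring_lmod S) (ring_lmod S) \<phi>"
  have K: "K = {t \<in> EM. \<forall>x\<in>carrier M. t (f x) = \<zero>}"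
    unfolding K_def mker_def \<phi>_def using f by (auto simp: zeroS_iff)
  have Kd: "dsummand S (ring_lmod S) K" and Kf: "fully_invariant S (ring_lmod S) K"
    using ssr \<phi> unfolding strongly_self_rickart_def K_def by auto
  obtain L where Ks: "is_submod S (ring_lmod S) K" and Ls: "is_submod S (ring_lmod S) L"
    and KL: "K \<inter> L = {zero S}" and dec: "\<forall>x\<in>carrier S. \<exists>n\<in>K. \<exists>l\<in>L. x = add S n l"
    using Kd unfolding dsummand_def by auto
  obtain e l where e: "e \<in> K" and l: "l \<in> L" and one: "one S = add S e l"
    using dec by (metis S_one_closed End_carrier)
  have LS: "L \<subseteq> EM" using Ls by (auto simp: is_submod_def)
  have eM: "e \<in> EM" using e K by auto
  have lM: "l \<in> EM" using l LS by auto
  have fe: "\<forall>x\<in>carrier M. e (f x) = \<zero>" using e K by auto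
  have ann: "\<forall>x\<in>carrier M. g (e x) = g x" if g: "g \<in> EM" "\<forall>x\<in>carrier M. g (f x) = \<zero>" for g
  proof -
    have gK: "g \<in> K" using g K by auto
    have geK: "mult S g e \<in> K" using Ks e g unfolding is_submod_def by auto
    have glL: "mult S g l \<in> L" using Ls l g unfolding is_submod_def by auto
    have c: "mult S g e \<in> EM" "mult S g l \<in> EM" using eM lM g by auto
    have g1: "g = add S (mult S g e) (mult S g l)"
    proof -
      have "g = mult S g (one S)" using g by simp
      also have "\<dots> = add S (mult S g e) (mult S g l)" unfolding one
        using eM lM g by (simp add: S_ext_iff hcb[OF eM] hcb[OF lM] mhomD(3)[OF g(1)])
      finally show ?thesis .
    qed
    have "mult S g l = g \<ominus>\<^bsub>ring_lmod S\<^esub> mult S g e"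
      using W.ag_add_minus2[of "mult S g e" "mult S g l"] c g1 by simp
    moreover have "g \<ominus>\<^bsub>ring_lmod S\<^esub> mult S g e \<in> K"
      using Ks gK geK unfolding is_submod_def a_minus_def by simp
    ultimately have "mult S g l \<in> K \<inter> L" using glL by simp
    then have gl0: "mult S g l = zero S" using KL by auto
    show "\<forall>x\<in>carrier M. g (e x) = g x"
    proof
      fix x assume x: "x \<in> carrier M"
      have "g x = add S (mult S g e) (mult S g l) x" using fun_cong[OF g1, of x] .
      also have "\<dots> = g (e x) \<oplus> g (l x)" using x by simp
      also have "g (l x) = mult S g l x" using x by simp
      also have "\<dots> = \<zero>" using gl0 x by simp
      finally show "g (e x) = g x" using x hcb[OF g(1)] hcb[OF eM] by simp
    qed
  qed
  have ee: "\<forall>x\<in>carrier M. e (e x) = e x" using ann[OF eM fe] .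
  have c1: "e (h (e x)) = e (h x)" if h: "h \<in> EM" and x: "x \<in> carrier M" for h x
  proof -
    have "(\<lambda>t\<in>carrier S. mult S t h) \<in> mhom S (ring_lmod S) (ring_lmod S)"
      using h by (intro rmult_endo) simp
    then have "(\<lambda>t\<in>carrier S. mult S t h) e \<in> K" using Kf e unfolding fully_invariant_def by blast
    then have "mult S e h \<in> K" using eM by simp
    then have "\<forall>y\<in>carrier M. e (h (f y)) = \<zero>" using K hcb[OF f] by auto
    then have "\<forall>y\<in>carrier M. e (h (e y)) = e (h y)"
      using ann[of "mult S e h"] h eM hcb[OF f] hcb[OF eM] by simp
    then show ?thesis using x by blast
  qed
  define \<phi>e where "\<phi>e = (\<lambda>t\<in>carrier S. mult S t e)"
  have \<phi>e: "\<phi>e \<in> mhom S (ring_lmod S) (ring_lmod S)" unfolding \<phi>e_def using eM by (intro rmult_endo) simp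
  have Kef: "fully_invariant S (ring_lmod S) (mker (ring_lmod S) (ring_lmod S) \<phi>e)"
    using ssr \<phi>e unfolding strongly_self_rickart_def by auto
  define t0 where "t0 = (\<lambda>x\<in>carrier M. x \<ominus> e x)"
  have t0: "t0 \<in> EM"
  proof -
    have "(\<lambda>x\<in>carrier M. (\<lambda>x\<in>carrier M. x) x \<ominus> e x) = t0"
      unfolding t0_def by (rule restrict_ext) simp
    then show ?thesis using hom_minusf[OF hom_id eM] by simp
  qed
  have t0K: "t0 \<in> mker (ring_lmod S) (ring_lmod S) \<phi>e"
    unfolding mker_def \<phi>e_def using t0 eM
    by (simp add: zeroS_iff t0_def ee ag_minus_self hcb[OF eM])
  have c2: "h (e x) = e (h (e x))" if h: "h \<in> EM" and x: "x \<in> carrier M" for h x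
  proof -
    have "(\<lambda>t\<in>carrier S. mult S t h) \<in> mhom S (ring_lmod S) (ring_lmod S)"
      using h by (intro rmult_endo) simp
    then have "(\<lambda>t\<in>carrier S. mult S t h) t0 \<in> mker (ring_lmod S) (ring_lmod S) \<phi>e"
      using Kef t0K unfolding fully_invariant_def by blast
    then have "mult S t0 h \<in> mker (ring_lmod S) (ring_lmod S) \<phi>e" using t0 by simp
    then have "\<phi>e (mult S t0 h) = zero S" by (simp add: mker_def)
    then have "mult S (mult S t0 h) e = zero S" using h t0 by (simp add: \<phi>e_def)
    then have "t0 (h (e x)) = \<zero>" using x h t0 eM zeroS_iff[of "mult S t0 h" e] hcb[OF eM] by simp
    then have "h (e x) \<ominus> e (h (e x)) = \<zero>" using x h eM hcb[OF eM] hcb[OF h] by (simp add: t0_def)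
    then show ?thesis using x h eM by (simp add: ag_eq_minus hcb[OF eM] hcb[OF h])
  qed
  have cen: "\<forall>h\<in>EM. \<forall>x\<in>carrier M. e (h x) = h (e x)" using c1 c2 by metis
  show ?thesis using eM ee fe cen ann by blast
qed

lemma B2':
  assumes e: "e \<in> EM" "\<forall>x\<in>carrier M. e (e x) = e x" "\<forall>x\<in>carrier M. e (f x) = \<zero>"
    "\<forall>h\<in>EM. \<forall>x\<in>carrier M. e (h x) = h (e x)"
    and f: "f \<in> EM"
    and kk: "\<forall>x\<in>carrier M. e x = \<zero> \<longrightarrow> x \<in> f ` carrier M"
  shows "dsummand (opp R) M (f ` carrier M) \<and> fully_invariant (opp R) M (f ` carrier M)"
proof -
  have eq: "f ` carrier M = {x \<in> carrier M. e x = \<zero>}"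
    using kk e(3) hcb[OF f] by auto
  have "dsummand (opp R) M {x \<in> carrier M. e x = \<zero>}"
    by (rule idem_summand(2)[OF abelian_group_axioms smult_closed M_sm0 e(1)]) (use e(2) in auto)
  moreover have "fully_invariant (opp R) M {x \<in> carrier M. e x = \<zero>}"
    unfolding fully_invariant_def
  proof (intro ballI subsetI)
    fix h u assume h: "h \<in> EM" and u: "u \<in> h ` {x \<in> carrier M. e x = \<zero>}"
    then obtain x where x: "x \<in> carrier M" "e x = \<zero>" "u = h x" by auto
    then have "e u = h (e x)" using e(4) h by simp
    then show "u \<in> {x \<in> carrier M. e x = \<zero>}" using x h hZ[OF h] hc[OF h x(1)] by simp
  qed
  ultimately show ?thesis using eq by simp
qed

end

context RMf
begin

lemma ag_minus_cancel: "x \<in> carrier M \<Longrightarrow> y \<in> carrier M \<Longrightarrow> (x \<ominus> y) \<ominus> x = \<ominus> y"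
  by (metis a_minus_def a_comm a_inv_closed ag_add_minus)

lemma dual_proj:
  assumes dssr: "dual_strongly_self_rickart (opp R) M"
  shows "\<exists>e\<in>EM. (\<forall>x\<in>carrier M. e x = \<zero> \<longleftrightarrow> x \<in> II) \<and> (\<forall>x\<in>carrier M. e x \<ominus> x \<in> II) \<and>
     (\<forall>g\<in>EM. (\<forall>y\<in>carrier M. g (f y) = \<zero>) \<longrightarrow> (\<forall>x\<in>carrier M. g (e x) = g x))"
proof -
  have "dsummand (opp R) M II" using dssr fEM unfolding dual_strongly_self_rickart_def by auto
  then obtain p where p: "p \<in> EM" "\<forall>x\<in>carrier M. p x \<in> II" "\<forall>x\<in>II. p x = x"
    using summand_proj by blast
  define e where "e = (\<lambda>x\<in>carrier M. x \<ominus> p x)"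
  have eE: "e \<in> EM"
  proof -
    have "(\<lambda>x\<in>carrier M. (\<lambda>x\<in>carrier M. x) x \<ominus> p x) = e"
      unfolding e_def by (rule restrict_ext) simp
    then show ?thesis using hom_minusf[OF hom_id p(1)] by simp
  qed
  have pM: "\<And>x. x \<in> carrier M \<Longrightarrow> p x \<in> carrier M" using hcb[OF p(1)] by simp
  have z: "e x = \<zero> \<longleftrightarrow> x \<in> II" if x: "x \<in> carrier M" for x
  proof
    assume "e x = \<zero>"
    then have "x = p x" using x pM[OF x] ag_eq_minus by (simp add: e_def)
    then show "x \<in> II" using p(2) x by metis
  next
    assume xi: "x \<in> II"
    then obtain u where u: "u \<in> carrier M" "x = f u" by auto
    then have "p x = x" using p(3) by simp
    then show "e x = \<zero>" using x ag_minus_self by (simp add: e_def)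
  qed
  have m: "e x \<ominus> x \<in> II" if x: "x \<in> carrier M" for x
    using ag_minus_cancel[OF x pM[OF x]] II_neg[of "p x"] p(2) x by (simp add: e_def)
  have g: "\<forall>x\<in>carrier M. g (e x) = g x" if g: "g \<in> EM" "\<forall>y\<in>carrier M. g (f y) = \<zero>" for g
  proof
    fix x assume x: "x \<in> carrier M"
    obtain y where y: "y \<in> carrier M" "p x = f y" using p(2) x by auto
    have "g (e x) = g x \<ominus> g (p x)" using hM[OF g(1) x pM[OF x]] x by (simp add: e_def)
    also have "g (p x) = \<zero>" using y g(2) by simp
    finally show "g (e x) = g x" using x hc[OF g(1) x] ag_minus_zero by simp
  qed
  show ?thesis using eE z m g by blast
qed

end


lemma homXM_simps[simp]:
  "carrier (homXM_lmod R M V) = mhom (opp R) V M"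
  "add (homXM_lmod R M V) = (\<lambda>\<phi> \<psi>. \<lambda>x\<in>carrier V. \<phi> x \<oplus>\<^bsub>M\<^esub> \<psi> x)"
  "smult (homXM_lmod R M V) = (\<lambda>s \<phi>. \<lambda>x\<in>carrier V. s (\<phi> x))"
  by (simp_all add: homXM_lmod_def)

lemma End_lmod_simps[simp]:
  "carrier (End_lmod M) = carrier M" "add (End_lmod M) = add M" "smult (End_lmod M) = (\<lambda>s m. s m)"
  by (simp_all add: End_lmod_def)

context RMf
begin

abbreviation "HC \<equiv> mhom (opp R) CK M"

lemma HC_add: assumes a: "a \<in> HC" and b: "b \<in> HC"
  shows "(\<lambda>x\<in>carrier CK. a x \<oplus> b x) \<in> HC"
proof (rule mhomI)
  show "\<And>x. x \<in> carrier CK \<Longrightarrow> (\<lambda>x\<in>carrier CK. a x \<oplus> b x) x \<in> carrier M"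
    using mhomD(1)[OF a] mhomD(1)[OF b] by simp
  show "\<And>x. x \<notin> carrier CK \<Longrightarrow> (\<lambda>x\<in>carrier CK. a x \<oplus> b x) x = undefined" by simp
next
  fix x y assume x: "x \<in> carrier CK" and y: "y \<in> carrier CK"
  obtain u v where uv: "u \<in> carrier M" "x = cs u" "v \<in> carrier M" "y = cs v" using x y CK_carrier by auto
  have xy: "x \<oplus>\<^bsub>CK\<^esub> y \<in> carrier CK" using uv CK_add cs_in by simp
  have c: "a x \<in> carrier M" "a y \<in> carrier M" "b x \<in> carrier M" "b y \<in> carrier M"
    using mhomD(1)[OF a] mhomD(1)[OF b] x y by auto
  show "(\<lambda>x\<in>carrier CK. a x \<oplus> b x) (x \<oplus>\<^bsub>CK\<^esub> y) =
    (\<lambda>x\<in>carrier CK. a x \<oplus> b x) x \<oplus> (\<lambda>x\<in>carrier CK. a x \<oplus> b x) y"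
    using xy x y mhomD(3)[OF a x y] mhomD(3)[OF b x y] c
    by (simp add: ag_add_minus_distrib a_ac)
next
  fix r x assume r: "r \<in> carrier (opp R)" and x: "x \<in> carrier CK"
  obtain u where u: "u \<in> carrier M" "x = cs u" using x CK_carrier by auto
  have rx: "smult CK r x \<in> carrier CK" using u r CK_smult cs_in smult_closed by simp
  have c: "a x \<in> carrier M" "b x \<in> carrier M" using mhomD(1)[OF a] mhomD(1)[OF b] x by auto
  show "(\<lambda>x\<in>carrier CK. a x \<oplus> b x) (smult CK r x) = smult M r ((\<lambda>x\<in>carrier CK. a x \<oplus> b x) x)"
    using rx x mhomD(4)[OF a r x] mhomD(4)[OF b r x] smult_add[OF r c] by simp
qed

lemma HC_smult: assumes s: "s \<in> EM" and a: "a \<in> HC"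
  shows "(\<lambda>x\<in>carrier CK. s (a x)) \<in> HC"
proof (rule mhomI)
  show "\<And>x. x \<in> carrier CK \<Longrightarrow> (\<lambda>x\<in>carrier CK. s (a x)) x \<in> carrier M"
    using mhomD(1)[OF a] hcb[OF s] by simp
  show "\<And>x. x \<notin> carrier CK \<Longrightarrow> (\<lambda>x\<in>carrier CK. s (a x)) x = undefined" by simp
next
  fix x y assume x: "x \<in> carrier CK" and y: "y \<in> carrier CK"
  obtain u v where uv: "u \<in> carrier M" "x = cs u" "v \<in> carrier M" "y = cs v" using x y CK_carrier by auto
  have xy: "x \<oplus>\<^bsub>CK\<^esub> y \<in> carrier CK" using uv CK_add cs_in by simp
  show "(\<lambda>x\<in>carrier CK. s (a x)) (x \<oplus>\<^bsub>CK\<^esub> y) = (\<lambda>x\<in>carrier CK. s (a x)) x \<oplus> (\<lambda>x\<in>carrier CK. s (a x)) y"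
    using xy x y mhomD(3)[OF a x y] mhomD(3)[OF s] mhomD(1)[OF a] by simp
next
  fix r x assume r: "r \<in> carrier (opp R)" and x: "x \<in> carrier CK"
  obtain u where u: "u \<in> carrier M" "x = cs u" using x CK_carrier by auto
  have rx: "smult CK r x \<in> carrier CK" using u r CK_smult cs_in smult_closed by simp
  show "(\<lambda>x\<in>carrier CK. s (a x)) (smult CK r x) = smult M r ((\<lambda>x\<in>carrier CK. s (a x)) x)"
    using rx x mhomD(4)[OF a r x] mhomD(4)[OF s r] mhomD(1)[OF a] by simp
qed

lemma HC_ext: assumes a: "a \<in> HC" and b: "b \<in> HC" and ab: "\<And>u. u \<in> carrier M \<Longrightarrow> a (cs u) = b (cs u)"
  shows "a = b"
proof
  fix x show "a x = b x"
  proof (cases "x \<in> carrier CK")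
    case True
    then obtain u where "u \<in> carrier M" "x = cs u" using CK_carrier by auto
    then show ?thesis using ab by simp
  next
    case False
    then show ?thesis using mhomD(2)[OF a] mhomD(2)[OF b] by simp
  qed
qed

context
  fixes e assumes eE: "e \<in> EM" and ez: "\<forall>x\<in>carrier M. e x = \<zero> \<longleftrightarrow> x \<in> II"
    and em: "\<forall>x\<in>carrier M. e x \<ominus> x \<in> II"
    and eg: "\<forall>g\<in>EM. (\<forall>y\<in>carrier M. g (f y) = \<zero>) \<longrightarrow> (\<forall>x\<in>carrier M. g (e x) = g x)"
begin

lemma eI: "\<forall>x\<in>II. e x = \<zero>" using ez II_sub by auto

lemma ph: "phi e \<in> HC" by (rule phi_hom[OF eE eI])
lemma phcs: "a \<in> carrier M \<Longrightarrow> phi e (cs a) = e a" by (rule phi_cs[OF eE eI])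

lemma ph_inj: "inj_on (phi e) (carrier CK)"
proof (rule inj_onI)
  fix A B assume A: "A \<in> carrier CK" and B: "B \<in> carrier CK" and eq: "phi e A = phi e B"
  obtain a b where ab: "a \<in> carrier M" "A = cs a" "b \<in> carrier M" "B = cs b" using A B CK_carrier by auto
  have "e a = e b" using eq ab phcs by simp
  then have "e (a \<ominus> b) = \<zero>" using hM[OF eE, of a b] ab hc[OF eE] ag_minus_self by simp
  then have "a \<ominus> b \<in> II" using ez ab by simp
  then show "A = B" using cs_eq ab by simp
qed

lemma fwd_ii: "M_cocyclic R M CK"
  unfolding M_cocyclic_def using ph ph_inj by blast

lemma fwd_iv: "epi_locally_split R M CK (coker M f)"
  unfolding epi_locally_split_def
proof
  fix c assume "c \<in> carrier CK"
  then obtain a where a: "a \<in> carrier M" "c = cs a" using CK_carrier by auto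
  have "coker M f (phi e c) = cs (e a)" using a phcs coker_apply hc[OF eE] by simp
  also have "\<dots> = cs a" using cs_eq[of "e a" a] em a hc[OF eE] by simp
  finally show "\<exists>h\<in>HC. coker M f (h c) = c" using ph a by blast
qed

lemma fwd_v: "carrier CK \<noteq> {zero CK} \<Longrightarrow> \<exists>h\<in>HC. \<exists>c\<in>carrier CK. h c \<noteq> \<zero>"
proof -
  assume "carrier CK \<noteq> {zero CK}"
  then obtain c where c: "c \<in> carrier CK" "c \<noteq> II" using CK_zero_in CK_zero by auto
  then obtain a where a: "a \<in> carrier M" "c = cs a" using CK_carrier by auto
  have "a \<notin> II" using c a cs_zero_iff by simp
  then have "phi e c \<noteq> \<zero>" using ez a phcs by simp
  then show ?thesis using ph c by blast
qed

lemma fwd_iii: "in_Refl R M CK"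
  unfolding in_Refl_def
proof -
  define ev where "ev = (\<lambda>x\<in>carrier CK. (\<lambda>\<phi>\<in>HC. \<phi> x))"
  define T where "T = mhom (End_ring (opp R) M) (homXM_lmod R M CK) (End_lmod M)"
  have evT: "ev x \<in> T" if x: "x \<in> carrier CK" for x
    unfolding T_def
  proof (rule mhomI)
    show "\<And>\<phi>. \<phi> \<in> carrier (homXM_lmod R M CK) \<Longrightarrow> ev x \<phi> \<in> carrier (End_lmod M)"
      using x mhomD(1) by (fastforce simp: ev_def)
    show "\<And>\<phi>. \<phi> \<notin> carrier (homXM_lmod R M CK) \<Longrightarrow> ev x \<phi> = undefined" using x by (simp add: ev_def)
  next
    fix a b assume a: "a \<in> carrier (homXM_lmod R M CK)" and b: "b \<in> carrier (homXM_lmod R M CK)"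
    then show "ev x (a \<oplus>\<^bsub>homXM_lmod R M CK\<^esub> b) = ev x a \<oplus>\<^bsub>End_lmod M\<^esub> ev x b"
      using x HC_add[of a b] by (simp add: ev_def)
  next
    fix s a assume s: "s \<in> carrier (End_ring (opp R) M)" and a: "a \<in> carrier (homXM_lmod R M CK)"
    then show "ev x (smult (homXM_lmod R M CK) s a) = smult (End_lmod M) s (ev x a)"
      using x HC_smult[of s a] by (simp add: ev_def)
  qed
  have inj: "inj_on ev (carrier CK)"
  proof (rule inj_onI)
    fix A B assume A: "A \<in> carrier CK" and B: "B \<in> carrier CK" and eq: "ev A = ev B"
    have "phi e A = phi e B" using fun_cong[OF eq, of "phi e"] A B ph by (simp add: ev_def)
    then show "A = B" using ph_inj A B by (simp add: inj_on_def)
  qed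
  have surj: "T \<subseteq> ev ` carrier CK"
  proof
    fix \<Psi> assume \<Psi>: "\<Psi> \<in> T"
    define y where "y = \<Psi> (phi e)"
    have y: "y \<in> carrier M" using mhomD(1)[OF \<Psi>[unfolded T_def], of "phi e"] ph by (simp add: y_def)
    have "\<Psi> = ev (cs y)"
    proof
      fix \<phi>
      show "\<Psi> \<phi> = ev (cs y) \<phi>"
      proof (cases "\<phi> \<in> HC")
        case False
        then show ?thesis using mhomD(2)[OF \<Psi>[unfolded T_def], of \<phi>] y cs_in by (simp add: ev_def)
      next
        case True
        define g where "g = (\<lambda>x\<in>carrier M. \<phi> (cs x))"
        have gE: "g \<in> EM" unfolding g_def by (rule hom_from_CK(1)[OF True])
        have gf: "\<forall>z\<in>carrier M. g (f z) = \<zero>" using hom_from_CK_f[OF True] fc by (simp add: g_def)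
        have ge: "\<forall>x\<in>carrier M. g (e x) = g x" using eg gE gf by blast
        have sm: "smult (homXM_lmod R M CK) g (phi e) = \<phi>"
        proof (rule HC_ext)
          show "smult (homXM_lmod R M CK) g (phi e) \<in> HC" using HC_smult[OF gE ph] by simp
          show "\<phi> \<in> HC" by fact
          fix u assume u: "u \<in> carrier M"
          have "smult (homXM_lmod R M CK) g (phi e) (cs u) = g (e u)" using cs_in[OF u] phcs[OF u] by simp
          also have "\<dots> = \<phi> (cs u)" using ge u by (simp add: g_def)
          finally show "smult (homXM_lmod R M CK) g (phi e) (cs u) = \<phi> (cs u)" .
        qed
        have "\<Psi> \<phi> = \<Psi> (smult (homXM_lmod R M CK) g (phi e))" using sm by simp
        also have "\<dots> = g (\<Psi> (phi e))"
          using mhomD(4)[OF \<Psi>[unfolded T_def], of g "phi e"] gE ph by simp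
        also have "\<dots> = \<phi> (cs y)" using y by (simp add: g_def y_def)
        finally show ?thesis using True cs_in[OF y] by (simp add: ev_def)
      qed
    qed
    then show "\<Psi> \<in> ev ` carrier CK" using cs_in[OF y] by blast
  qed
  have "ev ` carrier CK = T" using evT surj by blast
  then show "bij_betw (\<lambda>x\<in>carrier CK. \<lambda>\<phi>\<in>HC. \<phi> x) (carrier CK) T"
    unfolding bij_betw_def using inj by (simp add: ev_def)
qed

end

end


context RMf
begin

lemma conv_zero:
  assumes eE: "e \<in> EM"
    and eann: "\<forall>g\<in>EM. (\<forall>x\<in>carrier M. g (f x) = \<zero>) \<longrightarrow> (\<forall>x\<in>carrier M. g (e x) = g x)"
    and h: "h \<in> HC" and x: "x \<in> carrier M" and ex: "e x = \<zero>"
  shows "h (cs x) = \<zero>"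
proof -
  define g where "g = (\<lambda>z\<in>carrier M. h (cs z))"
  have gE: "g \<in> EM" unfolding g_def by (rule hom_from_CK(1)[OF h])
  have gf: "\<forall>z\<in>carrier M. g (f z) = \<zero>" using hom_from_CK_f[OF h] fc by (simp add: g_def)
  have "g (e x) = g x" using eann gE gf x by blast
  then have "g x = \<zero>" using ex hZ[OF gE] by simp
  then show ?thesis using x by (simp add: g_def)
qed

end

context RM
begin

lemma part2_generic:
  assumes fwd: "\<And>f e. RMf R M f \<Longrightarrow> e \<in> EM \<Longrightarrow> (\<forall>x\<in>carrier M. e x = \<zero> \<longleftrightarrow> x \<in> f ` carrier M) \<Longrightarrow>
      (\<forall>x\<in>carrier M. e x \<ominus> x \<in> f ` carrier M) \<Longrightarrow>
      (\<forall>g\<in>EM. (\<forall>y\<in>carrier M. g (f y) = \<zero>) \<longrightarrow> (\<forall>x\<in>carrier M. g (e x) = g x)) \<Longrightarrow> P f"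
    and bwd: "\<And>f e. RMf R M f \<Longrightarrow> P f \<Longrightarrow> e \<in> EM \<Longrightarrow> (\<forall>x\<in>carrier M. e (e x) = e x) \<Longrightarrow>
      (\<forall>x\<in>carrier M. e (f x) = \<zero>) \<Longrightarrow> (\<forall>h\<in>EM. \<forall>x\<in>carrier M. e (h x) = h (e x)) \<Longrightarrow>
      (\<forall>g\<in>EM. (\<forall>x\<in>carrier M. g (f x) = \<zero>) \<longrightarrow> (\<forall>x\<in>carrier M. g (e x) = g x)) \<Longrightarrow>
      (\<forall>x\<in>carrier M. e x = \<zero> \<longrightarrow> x \<in> f ` carrier M)"
  shows "dual_strongly_self_rickart (opp R) M \<longleftrightarrow>
       strongly_self_rickart S (ring_lmod S) \<and> (\<forall>f\<in>carrier S. P f)"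
proof
  assume dssr: "dual_strongly_self_rickart (opp R) M"
  show "strongly_self_rickart S (ring_lmod S) \<and> (\<forall>f\<in>carrier S. P f)"
  proof (intro conjI ballI)
    show "strongly_self_rickart S (ring_lmod S)" by (rule A1'[OF dssr])
    fix f assume f: "f \<in> carrier S"
    interpret F: RMf R M f using RMf_inst f by simp
    obtain e where e: "e \<in> EM" "\<forall>x\<in>carrier M. e x = \<zero> \<longleftrightarrow> x \<in> f ` carrier M"
      "\<forall>x\<in>carrier M. e x \<ominus> x \<in> f ` carrier M"
      "\<forall>g\<in>EM. (\<forall>y\<in>carrier M. g (f y) = \<zero>) \<longrightarrow> (\<forall>x\<in>carrier M. g (e x) = g x)"
      using F.dual_proj[OF dssr] by blast
    show "P f" by (rule fwd[OF F.RMf_axioms e])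
  qed
next
  assume H: "strongly_self_rickart S (ring_lmod S) \<and> (\<forall>f\<in>carrier S. P f)"
  show "dual_strongly_self_rickart (opp R) M"
    unfolding dual_strongly_self_rickart_def
  proof
    fix f assume f: "f \<in> EM"
    interpret F: RMf R M f using RMf_inst f by simp
    obtain e where e: "e \<in> EM" "\<forall>x\<in>carrier M. e (e x) = e x" "\<forall>x\<in>carrier M. e (f x) = \<zero>"
      "\<forall>h\<in>EM. \<forall>x\<in>carrier M. e (h x) = h (e x)"
      "\<forall>g\<in>EM. (\<forall>x\<in>carrier M. g (f x) = \<zero>) \<longrightarrow> (\<forall>x\<in>carrier M. g (e x) = g x)"
      using B1'[OF conjunct1[OF H] f] by blast
    have "P f" using H f by simp
    have kk: "\<forall>x\<in>carrier M. e x = \<zero> \<longrightarrow> x \<in> f ` carrier M"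
      by (rule bwd[OF F.RMf_axioms \<open>P f\<close> e])
    show "dsummand (opp R) M (f ` carrier M) \<and> fully_invariant (opp R) M (f ` carrier M)"
      by (rule B2'[OF e(1-4) f kk])
  qed
qed

lemma part2_ii:
  "dual_strongly_self_rickart (opp R) M \<longleftrightarrow>
       strongly_self_rickart S (ring_lmod S) \<and> (\<forall>f\<in>carrier S. M_cocyclic R M (Coker M f))"
proof (rule part2_generic)
  fix f e assume F: "RMf R M f" and e: "e \<in> EM" "\<forall>x\<in>carrier M. e x = \<zero> \<longleftrightarrow> x \<in> f ` carrier M"
      "\<forall>x\<in>carrier M. e x \<ominus> x \<in> f ` carrier M"
      "\<forall>g\<in>EM. (\<forall>y\<in>carrier M. g (f y) = \<zero>) \<longrightarrow> (\<forall>x\<in>carrier M. g (e x) = g x)"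
  interpret F: RMf R M f by fact
  show "M_cocyclic R M (Coker M f)" by (rule F.fwd_ii[OF e])
next
  fix f e assume F: "RMf R M f" and P: "M_cocyclic R M (Coker M f)" and e: "e \<in> EM"
    "\<forall>g\<in>EM. (\<forall>x\<in>carrier M. g (f x) = \<zero>) \<longrightarrow> (\<forall>x\<in>carrier M. g (e x) = g x)"
  interpret F: RMf R M f by fact
  obtain h where h: "h \<in> F.HC" "inj_on h (carrier F.CK)" using P unfolding M_cocyclic_def by blast
  show "\<forall>x\<in>carrier M. e x = \<zero> \<longrightarrow> x \<in> f ` carrier M"
  proof (intro ballI impI)
    fix x assume x: "x \<in> carrier M" and ex: "e x = \<zero>"
    have "h (F.cs x) = h F.II" using F.conv_zero[OF e h(1) x ex] F.hom_from_CK(2)[OF h(1)] by simp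
    then have "F.cs x = F.II" using h(2) F.cs_in[OF x] F.CK_zero_in by (simp add: inj_on_def)
    then show "x \<in> f ` carrier M" using F.cs_zero_iff x by simp
  qed
qed

lemma part2_iv:
  "dual_strongly_self_rickart (opp R) M \<longleftrightarrow>
       strongly_self_rickart S (ring_lmod S) \<and>
       (\<forall>f\<in>carrier S. epi_locally_split R M (Coker M f) (coker M f))"
proof (rule part2_generic)
  fix f e assume F: "RMf R M f" and e: "e \<in> EM" "\<forall>x\<in>carrier M. e x = \<zero> \<longleftrightarrow> x \<in> f ` carrier M"
      "\<forall>x\<in>carrier M. e x \<ominus> x \<in> f ` carrier M"
      "\<forall>g\<in>EM. (\<forall>y\<in>carrier M. g (f y) = \<zero>) \<longrightarrow> (\<forall>x\<in>carrier M. g (e x) = g x)"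
  interpret F: RMf R M f by fact
  show "epi_locally_split R M (Coker M f) (coker M f)" by (rule F.fwd_iv[OF e])
next
  fix f e assume F: "RMf R M f" and P: "epi_locally_split R M (Coker M f) (coker M f)" and e: "e \<in> EM"
    "\<forall>g\<in>EM. (\<forall>x\<in>carrier M. g (f x) = \<zero>) \<longrightarrow> (\<forall>x\<in>carrier M. g (e x) = g x)"
  interpret F: RMf R M f by fact
  show "\<forall>x\<in>carrier M. e x = \<zero> \<longrightarrow> x \<in> f ` carrier M"
  proof (intro ballI impI)
    fix x assume x: "x \<in> carrier M" and ex: "e x = \<zero>"
    obtain h where h: "h \<in> F.HC" "coker M f (h (F.cs x)) = F.cs x"
      using P F.cs_in[OF x] unfolding epi_locally_split_def by blast
    have "h (F.cs x) = \<zero>" by (rule F.conv_zero[OF e h(1) x ex])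
    then have "F.cs x = F.cs \<zero>" using h(2) F.coker_apply[of \<zero>] by simp
    then show "x \<in> f ` carrier M" using F.cs_zero_iff x F.cs0 by simp
  qed
qed

lemma part2_iii:
  "dual_strongly_self_rickart (opp R) M \<longleftrightarrow>
       strongly_self_rickart S (ring_lmod S) \<and> (\<forall>f\<in>carrier S. in_Refl R M (Coker M f))"
proof (rule part2_generic)
  fix f e assume F: "RMf R M f" and e: "e \<in> EM" "\<forall>x\<in>carrier M. e x = \<zero> \<longleftrightarrow> x \<in> f ` carrier M"
      "\<forall>x\<in>carrier M. e x \<ominus> x \<in> f ` carrier M"
      "\<forall>g\<in>EM. (\<forall>y\<in>carrier M. g (f y) = \<zero>) \<longrightarrow> (\<forall>x\<in>carrier M. g (e x) = g x)"
  interpret F: RMf R M f by fact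
  show "in_Refl R M (Coker M f)" by (rule F.fwd_iii[OF e])
next
  fix f e assume F: "RMf R M f" and P: "in_Refl R M (Coker M f)" and e: "e \<in> EM"
    "\<forall>g\<in>EM. (\<forall>x\<in>carrier M. g (f x) = \<zero>) \<longrightarrow> (\<forall>x\<in>carrier M. g (e x) = g x)"
  interpret F: RMf R M f by fact
  have inj: "inj_on (\<lambda>x\<in>carrier F.CK. \<lambda>\<phi>\<in>F.HC. \<phi> x) (carrier F.CK)"
    using P unfolding in_Refl_def bij_betw_def by blast
  show "\<forall>x\<in>carrier M. e x = \<zero> \<longrightarrow> x \<in> f ` carrier M"
  proof (intro ballI impI)
    fix x assume x: "x \<in> carrier M" and ex: "e x = \<zero>"
    have "(\<lambda>\<phi>\<in>F.HC. \<phi> (F.cs x)) = (\<lambda>\<phi>\<in>F.HC. \<phi> F.II)"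
    proof (rule restrict_ext)
      fix \<phi> assume \<phi>: "\<phi> \<in> F.HC"
      show "\<phi> (F.cs x) = \<phi> F.II" using F.conv_zero[OF e \<phi> x ex] F.hom_from_CK(2)[OF \<phi>] by simp
    qed
    then have "(\<lambda>x\<in>carrier F.CK. \<lambda>\<phi>\<in>F.HC. \<phi> x) (F.cs x) = (\<lambda>x\<in>carrier F.CK. \<lambda>\<phi>\<in>F.HC. \<phi> x) F.II"
      using F.cs_in[OF x] F.CK_zero_in by simp
    then have "F.cs x = F.II" using inj F.cs_in[OF x] F.CK_zero_in unfolding inj_on_def by blast
    then show "x \<in> f ` carrier M" using F.cs_zero_iff x by simp
  qed
qed

lemma part2_v:
  "dual_strongly_self_rickart (opp R) M \<longleftrightarrow>
       strongly_self_rickart S (ring_lmod S) \<and> c_quasi_coretractable R M"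
proof
  assume dssr: "dual_strongly_self_rickart (opp R) M"
  show "strongly_self_rickart S (ring_lmod S) \<and> c_quasi_coretractable R M"
    unfolding c_quasi_coretractable_def
  proof (intro conjI ballI impI)
    show "strongly_self_rickart S (ring_lmod S)" by (rule A1'[OF dssr])
    fix f assume f: "f \<in> carrier S" and nz: "carrier (Coker M f) \<noteq> {\<zero>\<^bsub>Coker M f\<^esub>}"
    interpret F: RMf R M f using RMf_inst f by simp
    obtain e where e: "e \<in> EM" "\<forall>x\<in>carrier M. e x = \<zero> \<longleftrightarrow> x \<in> f ` carrier M"
      "\<forall>x\<in>carrier M. e x \<ominus> x \<in> f ` carrier M"
      "\<forall>g\<in>EM. (\<forall>y\<in>carrier M. g (f y) = \<zero>) \<longrightarrow> (\<forall>x\<in>carrier M. g (e x) = g x)"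
      using F.dual_proj[OF dssr] by blast
    show "\<exists>h\<in>mhom (opp R) (Coker M f) M. \<exists>c\<in>carrier (Coker M f). h c \<noteq> \<zero>"
      by (rule F.fwd_v[OF e nz])
  qed
next
  assume H: "strongly_self_rickart S (ring_lmod S) \<and> c_quasi_coretractable R M"
  show "dual_strongly_self_rickart (opp R) M"
    unfolding dual_strongly_self_rickart_def
  proof
    fix f assume f: "f \<in> EM"
    interpret F: RMf R M f using RMf_inst f by simp
    obtain e where e: "e \<in> EM" "\<forall>x\<in>carrier M. e (e x) = e x" "\<forall>x\<in>carrier M. e (f x) = \<zero>"
      "\<forall>h\<in>EM. \<forall>x\<in>carrier M. e (h x) = h (e x)"
      "\<forall>g\<in>EM. (\<forall>x\<in>carrier M. g (f x) = \<zero>) \<longrightarrow> (\<forall>x\<in>carrier M. g (e x) = g x)"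
      using B1'[OF conjunct1[OF H] f] by blast
    have kk: "\<forall>x\<in>carrier M. e x = \<zero> \<longrightarrow> x \<in> f ` carrier M"
    proof (rule ccontr)
      assume "\<not> (\<forall>x\<in>carrier M. e x = \<zero> \<longrightarrow> x \<in> f ` carrier M)"
      then obtain x where x: "x \<in> carrier M" "e x = \<zero>" "x \<notin> f ` carrier M" by blast
      define g' where "g' = add S f e"
      have g': "g' \<in> EM" using f e(1) by (simp add: g'_def)
      interpret G: RMf R M g' using RMf_inst g' by simp
      have fe: "\<And>z. z \<in> carrier M \<Longrightarrow> f (e z) = \<zero>"
        using e(3) e(4)[rule_format, OF f] by simp
      have xg: "x \<notin> g' ` carrier M"
      proof
        assume "x \<in> g' ` carrier M"
        then obtain y where y: "y \<in> carrier M" "x = f y \<oplus> e y" by (auto simp: g'_def)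
        have "e x = e (f y) \<oplus> e (e y)" using y mhomD(3)[OF e(1)] hc[OF f] hc[OF e(1)] by simp
        then have "e x = e y" using e(2,3) y hc[OF e(1) y(1)] by simp
        then have "e y = \<zero>" using x by simp
        then have "x = f y" using y hc[OF f y(1)] by simp
        then show False using x y by blast
      qed
      have "G.cs x \<noteq> G.II" using G.cs_zero_iff x(1) xg by simp
      then have nz2: "carrier (Coker M g') \<noteq> {\<zero>\<^bsub>Coker M g'\<^esub>}"
        using G.cs_in[OF x(1)] G.CK_zero by auto
      have "\<exists>h\<in>mhom (opp R) (Coker M g') M. \<exists>c\<in>carrier (Coker M g'). h c \<noteq> \<zero>"
        using H g' nz2 unfolding c_quasi_coretractable_def by simp
      then obtain h c where h: "h \<in> mhom (opp R) (Coker M g') M" and c: "c \<in> carrier (Coker M g')" "h c \<noteq> \<zero>"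
        by blast
      define G where "G = (\<lambda>z\<in>carrier M. h (G.cs z))"
      have GE: "G \<in> EM" unfolding G_def by (rule G.hom_from_CK(1)[OF h])
      have Gg: "\<forall>z\<in>carrier M. G (f z \<oplus> e z) = \<zero>"
      proof
        fix z assume z: "z \<in> carrier M"
        have "G (g' z) = \<zero>" using G.hom_from_CK_f[OF h z] z hc[OF g' z] by (simp add: G_def)
        then show "G (f z \<oplus> e z) = \<zero>" using z by (simp add: g'_def)
      qed
      have Ge: "\<forall>z\<in>carrier M. G (e z) = \<zero>"
      proof
        fix z assume z: "z \<in> carrier M"
        have ez: "e z \<in> carrier M" using hc[OF e(1) z] .
        have "G (f (e z) \<oplus> e (e z)) = \<zero>" using Gg ez by blast
        then show "G (e z) = \<zero>" using fe[OF z] e(2) z ez by simp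
      qed
      have Gf: "\<forall>z\<in>carrier M. G (f z) = \<zero>"
      proof
        fix z assume z: "z \<in> carrier M"
        have a1: "G (f z \<oplus> e z) = G (f z) \<oplus> G (e z)" by (rule mhomD(3)[OF GE hc[OF f z] hc[OF e(1) z]])
        have a2: "G (f z \<oplus> e z) = \<zero>" using Gg z by blast
        from a1 a2 have "G (f z) \<oplus> G (e z) = \<zero>" by simp
        then show "G (f z) = \<zero>" using Ge z hc[OF GE] hc[OF f z] by simp
      qed
      have G0: "\<forall>z\<in>carrier M. G z = \<zero>" using e(5) GE Gf Ge by metis
      obtain z where z: "z \<in> carrier M" "c = G.cs z" using c(1) G.CK_carrier by auto
      have "h c = G z" using z by (simp add: G_def)
      then show False using G0 z c(2) by simp
    qed
    show "dsummand (opp R) M (f ` carrier M) \<and> fully_invariant (opp R) M (f ` carrier M)"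
      by (rule B2'[OF e(1-4) f kk])
  qed
qed

end

theorem theorem4p12:
  fixes R :: "'r ring" and M :: "('r, 'm) module"
  assumes "ring R" and "rmod R M"
  defines "S \<equiv> End_ring (opp R) M"
  shows
   "(strongly_self_rickart (opp R) M \<longleftrightarrow>
       strongly_self_rickart (opp S) (ring_rmod S) \<and>
       (\<forall>f\<in>carrier S. M_cyclic R M (submod M (mker M M f))))
  \<and> (strongly_self_rickart (opp R) M \<longleftrightarrow>
       strongly_self_rickart (opp S) (ring_rmod S) \<and>
       (\<forall>f\<in>carrier S. in_Stat R M (submod M (mker M M f))))
  \<and> (strongly_self_rickart (opp R) M \<longleftrightarrow>
       strongly_self_rickart (opp S) (ring_rmod S) \<and>
       (\<forall>f\<in>carrier S. incl_locally_split R M (mker M M f)))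
  \<and> (strongly_self_rickart (opp R) M \<longleftrightarrow>
       strongly_self_rickart (opp S) (ring_rmod S) \<and> k_quasi_retractable R M)
  \<and> (dual_strongly_self_rickart (opp R) M \<longleftrightarrow>
       strongly_self_rickart S (ring_lmod S) \<and>
       (\<forall>f\<in>carrier S. M_cocyclic R M (Coker M f)))
  \<and> (dual_strongly_self_rickart (opp R) M \<longleftrightarrow>
       strongly_self_rickart S (ring_lmod S) \<and>
       (\<forall>f\<in>carrier S. in_Refl R M (Coker M f)))
  \<and> (dual_strongly_self_rickart (opp R) M \<longleftrightarrow>
       strongly_self_rickart S (ring_lmod S) \<and>
       (\<forall>f\<in>carrier S. epi_locally_split R M (Coker M f) (coker M f)))
  \<and> (dual_strongly_self_rickart (opp R) M \<longleftrightarrow>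
       strongly_self_rickart S (ring_lmod S) \<and> c_quasi_coretractable R M)"
proof -
  interpret RM R M by (rule RM.intro) (use assms in auto)
  show ?thesis unfolding S_def
    using part1_ii part1_iii part1_iv part1_v part2_ii part2_iii part2_iv part2_v by blast
qed

end
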